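(* Let $H$ be a separable complex Hilbert space, $\{v_j\}_{j\in\mathbb N}$ an orthonormal basis of $H$, $\{w_j\}_{j\in\mathbb N}$ a set of unit vectors in $H$, and $N\ge1$. Let $\mathcal B_N=\{w_j\}_{1\le j\le N}\cup\{v_j\}_{j\ge N+1}$ and $\tilde{\mathcal B}_N=\{p_N'(w_1),\dots,p_N'(w_N)\}\cup\{v_j\}_{j\ge N+1}$, where $H_N'=\operatorname{span}\{v_1,\dots,v_N\}$, $H_N''$ is its orthogonal complement, and $p_N',p_N''$ are the orthogonal projections onto $H_N',H_N''$. Let $U_N'$ and $U_N''$ be the $N\times N$ matrices with entries $\langle p_N'(w_i),p_N'(w_j)\rangle$ and $\langle p_N''(w_i),p_N''(w_j)\rangle$ respectively, $1\le i,j\le N$. Assume that $\{p_N'(w_1),\dots,p_N'(w_N)\}$ is a basis of $H_N'$. Then $\mathcal B_N$ is a Riesz basis of $H$ with optimal frame constants $$B_N=\max_{\vec c\in\mathbb C^N,\ |\vec c|\le1}\Big\{\langle U_N'\vec c,\vec c\rangle+\Big(\sqrt{1-|\vec c|^2}+\sqrt{\langle U_N''\vec c,\vec c\rangle}\Big)^2\Big\},$$ $$A_N=\min_{\vec c\in\mathbb C^N,\ |\vec c|\le1}\Big\{\langle U_N'\vec c,\vec c\rangle+\Big(\sqrt{1-|\vec c|^2}-\sqrt{\langle U_N''\vec c,\vec c\rangle}\Big)^2\Big\}.$$ Furthermore, $\tilde{\mathcal B}_N$ is a Riesz basis of $H$, and letting $\Lambda_N$ and $\lambda_N$ be the maximum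 and minimum eigenvalue of $U_N'$ and $\tilde A_N\le\tilde B_N$ the optimal frame constants of $\tilde{\mathcal B}_N$, we have $$B_N\ge\tilde B_N=\max\{\Lambda_N,1\},\qquad \lambda_N=\tilde A_N\le\max\{A_N,\tilde A_N\}\le\min_{1\le j\le N}\|p_N'(w_j)\|^2.$$
   Context: Here $|\vec c|=\sqrt{|c_1|^2+\dots+|c_N|^2}$ and $\langle\cdot,\cdot\rangle$ on $\mathbb C^N$ is the standard Hermitian inner product. A Riesz basis is a sequence $\{u_j\}$ such that there are $0<A\le B<\infty$ with $A\|f\|^2\le\sum_j|\langle f,u_j\rangle|^2\le B\|f\|^2$ for all $f\in H$ and $A\sum|a_j|^2\le\|\sum a_ju_j\|^2\le B\sum|a_j|^2$ for all finite coefficient sequences; its optimal frame constants are the largest such $A$ and smallest such $B$ (equivalently, the infimum and supremum of $\|\sum a_ju_j\|^2$ over finitely supported coefficient sequences with $\sum|a_j|^2=1$). *)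

theory Defs
  imports Complex_Main "HOL-Library.Countable_Set"
begin

text \<open>An abstract complex Hilbert space: the carrier is a type 'a with its additive group
structure, a scalar multiplication sc by complex numbers and an inner product ip
(linear in the first argument, conjugate symmetric, positive definite), complete for the
induced norm.\<close>

definition hnorm :: "('a \<Rightarrow> 'a \<Rightarrow> complex) \<Rightarrow> 'a \<Rightarrow> real" where
  "hnorm ip x = sqrt (Re (ip x x))"

definition complex_hilbert_space ::
  "(complex \<Rightarrow> 'a::ab_group_add \<Rightarrow> 'a) \<Rightarrow> ('a \<Rightarrow> 'a \<Rightarrow> complex) \<Rightarrow> bool" where
  "complex_hilbert_space sc ip \<longleftrightarrow>
     (\<forall>a b x. sc a (sc b x) = sc (a * b) x) \<and>
     (\<forall>x. sc 1 x = x) \<and>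
     (\<forall>a x y. sc a (x + y) = sc a x + sc a y) \<and>
     (\<forall>a b x. sc (a + b) x = sc a x + sc b x) \<and>
     (\<forall>x y z. ip (x + y) z = ip x z + ip y z) \<and>
     (\<forall>a x y. ip (sc a x) y = a * ip x y) \<and>
     (\<forall>x y. ip y x = cnj (ip x y)) \<and>
     (\<forall>x. 0 \<le> Re (ip x x)) \<and>
     (\<forall>x. ip x x = 0 \<longrightarrow> x = 0) \<and>
     (\<forall>s::nat \<Rightarrow> 'a. (\<forall>e>0. \<exists>M. \<forall>m\<ge>M. \<forall>n\<ge>M. hnorm ip (s m - s n) < e) \<longrightarrow>
        (\<exists>x. (\<lambda>n. hnorm ip (s n - x)) \<longlonglongrightarrow> 0))"

definition hseparable :: "('a::ab_group_add \<Rightarrow> 'a \<Rightarrow> complex) \<Rightarrow> bool" where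
  "hseparable ip \<longleftrightarrow> (\<exists>D. countable D \<and> (\<forall>x. \<forall>e>0. \<exists>d\<in>D. hnorm ip (x - d) < e))"

definition orthonormal_basis :: "('a::ab_group_add \<Rightarrow> 'a \<Rightarrow> complex) \<Rightarrow> (nat \<Rightarrow> 'a) \<Rightarrow> bool" where
  "orthonormal_basis ip v \<longleftrightarrow>
     (\<forall>i j. ip (v i) (v j) = (if i = j then 1 else 0)) \<and>
     (\<forall>f. (\<forall>j. ip f (v j) = 0) \<longrightarrow> f = 0)"

definition lsum :: "(complex \<Rightarrow> 'a::ab_group_add \<Rightarrow> 'a) \<Rightarrow> nat \<Rightarrow> (nat \<Rightarrow> complex) \<Rightarrow> (nat \<Rightarrow> 'a) \<Rightarrow> 'a" where
  "lsum sc n c u = (\<Sum>j<n. sc (c j) (u j))"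

definition fspan :: "(complex \<Rightarrow> 'a::ab_group_add \<Rightarrow> 'a) \<Rightarrow> nat \<Rightarrow> (nat \<Rightarrow> 'a) \<Rightarrow> 'a set" where
  "fspan sc n u = {lsum sc n c u | c. True}"

definition is_basis_of :: "(complex \<Rightarrow> 'a::ab_group_add \<Rightarrow> 'a) \<Rightarrow> nat \<Rightarrow> (nat \<Rightarrow> 'a) \<Rightarrow> 'a set \<Rightarrow> bool" where
  "is_basis_of sc n u M \<longleftrightarrow>
     (\<forall>c. lsum sc n c u = 0 \<longrightarrow> (\<forall>j<n. c j = 0)) \<and> fspan sc n u = M"

definition orth_compl :: "('a \<Rightarrow> 'a \<Rightarrow> complex) \<Rightarrow> 'a set \<Rightarrow> 'a set" where
  "orth_compl ip M = {x. \<forall>m\<in>M. ip x m = 0}"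

definition orth_proj :: "('a::ab_group_add \<Rightarrow> 'a \<Rightarrow> complex) \<Rightarrow> 'a set \<Rightarrow> 'a \<Rightarrow> 'a" where
  "orth_proj ip M x = (THE y. y \<in> M \<and> (\<forall>m\<in>M. ip (x - y) m = 0))"

definition riesz_basis :: "(complex \<Rightarrow> 'a::ab_group_add \<Rightarrow> 'a) \<Rightarrow> ('a \<Rightarrow> 'a \<Rightarrow> complex) \<Rightarrow> (nat \<Rightarrow> 'a) \<Rightarrow> bool" where
  "riesz_basis sc ip u \<longleftrightarrow> (\<exists>A B. 0 < A \<and> A \<le> B \<and>
     (\<forall>f. summable (\<lambda>j. (cmod (ip f (u j)))\<^sup>2) \<and>
          A * (hnorm ip f)\<^sup>2 \<le> (\<Sum>j. (cmod (ip f (u j)))\<^sup>2) \<and>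
          (\<Sum>j. (cmod (ip f (u j)))\<^sup>2) \<le> B * (hnorm ip f)\<^sup>2) \<and>
     (\<forall>n a. A * (\<Sum>j<n. (cmod (a j))\<^sup>2) \<le> (hnorm ip (lsum sc n a u))\<^sup>2 \<and>
            (hnorm ip (lsum sc n a u))\<^sup>2 \<le> B * (\<Sum>j<n. (cmod (a j))\<^sup>2)))"

text \<open>Optimal frame constants: inf / sup of the squared norm of finite combinations with
unit coefficient norm.\<close>
definition riesz_values :: "(complex \<Rightarrow> 'a::ab_group_add \<Rightarrow> 'a) \<Rightarrow> ('a \<Rightarrow> 'a \<Rightarrow> complex) \<Rightarrow> (nat \<Rightarrow> 'a) \<Rightarrow> real set" where
  "riesz_values sc ip u = {(hnorm ip (lsum sc n a u))\<^sup>2 | n a. (\<Sum>j<n. (cmod (a j))\<^sup>2) = 1}"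

definition opt_upper :: "(complex \<Rightarrow> 'a::ab_group_add \<Rightarrow> 'a) \<Rightarrow> ('a \<Rightarrow> 'a \<Rightarrow> complex) \<Rightarrow> (nat \<Rightarrow> 'a) \<Rightarrow> real" where
  "opt_upper sc ip u = Sup (riesz_values sc ip u)"

definition opt_lower :: "(complex \<Rightarrow> 'a::ab_group_add \<Rightarrow> 'a) \<Rightarrow> ('a \<Rightarrow> 'a \<Rightarrow> complex) \<Rightarrow> (nat \<Rightarrow> 'a) \<Rightarrow> real" where
  "opt_lower sc ip u = Inf (riesz_values sc ip u)"

text \<open>N x N matrices and vectors of C^N are functions restricted to indices < N.\<close>
definition gram :: "('a \<Rightarrow> 'a \<Rightarrow> complex) \<Rightarrow> (nat \<Rightarrow> 'a) \<Rightarrow> nat \<Rightarrow> nat \<Rightarrow> complex" where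
  "gram ip x i j = ip (x i) (x j)"

text \<open>The Hermitian form <U c, c> (real for Hermitian U, so we take the real part).\<close>
definition qform :: "nat \<Rightarrow> (nat \<Rightarrow> nat \<Rightarrow> complex) \<Rightarrow> (nat \<Rightarrow> complex) \<Rightarrow> real" where
  "qform N U c = Re (\<Sum>i<N. (\<Sum>j<N. U i j * c j) * cnj (c i))"

definition vnorm2 :: "nat \<Rightarrow> (nat \<Rightarrow> complex) \<Rightarrow> real" where
  "vnorm2 N c = (\<Sum>j<N. (cmod (c j))\<^sup>2)"

definition mat_eigenvalue :: "nat \<Rightarrow> (nat \<Rightarrow> nat \<Rightarrow> complex) \<Rightarrow> complex \<Rightarrow> bool" where
  "mat_eigenvalue N U \<mu> \<longleftrightarrow>
     (\<exists>c. (\<exists>i<N. c i \<noteq> 0) \<and> (\<forall>i<N. (\<Sum>j<N. U i j * c j) = \<mu> * c i))"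

text \<open>Largest / smallest eigenvalue (the eigenvalues of a Hermitian matrix are real).\<close>
definition max_eig :: "nat \<Rightarrow> (nat \<Rightarrow> nat \<Rightarrow> complex) \<Rightarrow> real" where
  "max_eig N U = Max {r. mat_eigenvalue N U (complex_of_real r)}"

definition min_eig :: "nat \<Rightarrow> (nat \<Rightarrow> nat \<Rightarrow> complex) \<Rightarrow> real" where
  "min_eig N U = Min {r. mat_eigenvalue N U (complex_of_real r)}"

end

theory Submission
  imports Defs "HOL-Analysis.Analysis" "Jordan_Normal_Form.Char_Poly"
begin


definition nsq :: "('a \<Rightarrow> 'a \<Rightarrow> complex) \<Rightarrow> 'a \<Rightarrow> real" where
  "nsq ip x = Re (ip x x)"

locale chs =
  fixes sc :: "complex \<Rightarrow> 'a::ab_group_add \<Rightarrow> 'a" and ip :: "'a \<Rightarrow> 'a \<Rightarrow> complex"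
  assumes hilb: "complex_hilbert_space sc ip"
begin

lemmas ax = hilb[unfolded complex_hilbert_space_def]
lemma sc_assoc: "sc a (sc b x) = sc (a * b) x"
  using ax[THEN conjunct1] by blast
lemma sc_one[simp]: "sc 1 x = x"
  using ax[THEN conjunct2, THEN conjunct1] by blast
lemma sc_add_right: "sc a (x + y) = sc a x + sc a y"
  using ax[THEN conjunct2, THEN conjunct2, THEN conjunct1] by blast
lemma sc_add_left: "sc (a + b) x = sc a x + sc b x"
  using ax[THEN conjunct2, THEN conjunct2, THEN conjunct2, THEN conjunct1] by blast
lemma ip_add_left: "ip (x + y) z = ip x z + ip y z"
  using ax[THEN conjunct2, THEN conjunct2, THEN conjunct2, THEN conjunct2, THEN conjunct1] by blast
lemma ip_sc_left: "ip (sc a x) y = a * ip x y"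
  using ax[THEN conjunct2, THEN conjunct2, THEN conjunct2, THEN conjunct2, THEN conjunct2, THEN conjunct1] by blast
lemma ip_conj: "ip y x = cnj (ip x y)"
  using ax[THEN conjunct2, THEN conjunct2, THEN conjunct2, THEN conjunct2, THEN conjunct2, THEN conjunct2, THEN conjunct1] by blast
lemma ip_nonneg: "0 \<le> Re (ip x x)"
  using ax[THEN conjunct2, THEN conjunct2, THEN conjunct2, THEN conjunct2, THEN conjunct2, THEN conjunct2, THEN conjunct2, THEN conjunct1] by blast
lemma ip_definite: "ip x x = 0 \<Longrightarrow> x = 0"
  using ax[THEN conjunct2, THEN conjunct2, THEN conjunct2, THEN conjunct2, THEN conjunct2, THEN conjunct2, THEN conjunct2, THEN conjunct2, THEN conjunct1] by blast
lemma complete: "(\<forall>e>0. \<exists>M. \<forall>m\<ge>M. \<forall>n\<ge>M. hnorm ip (s m - s n) < e) \<Longrightarrow> (\<exists>x. (\<lambda>n. hnorm ip (s n - x)) \<longlonglongrightarrow> 0)"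
  using ax[THEN conjunct2, THEN conjunct2, THEN conjunct2, THEN conjunct2, THEN conjunct2, THEN conjunct2, THEN conjunct2, THEN conjunct2, THEN conjunct2] by blast

lemma sc_zero_right[simp]: "sc a 0 = 0"
  using sc_add_right[of a 0 0] by simp
lemma sc_zero_left[simp]: "sc 0 x = 0"
  using sc_add_left[of 0 0 x] by simp
lemma sc_minus_right: "sc a (- x) = - sc a x"
  using minus_unique[of "sc a x" "sc a (-x)"] sc_add_right[of a x "-x"] by simp
lemma sc_diff_right: "sc a (x - y) = sc a x - sc a y"
  using sc_add_right[of a x "-y"] sc_minus_right by simp
lemma sc_minus_left: "sc (- a) x = - sc a x"
  using minus_unique[of "sc a x" "sc (-a) x"] sc_add_left[of a "-a" x] by simp
lemma sc_sum_right: "sc a (\<Sum>i\<in>S. f i) = (\<Sum>i\<in>S. sc a (f i))"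
  by (induction S rule: infinite_finite_induct) (auto simp: sc_add_right)
lemma sc_sum_left: "sc (\<Sum>i\<in>S. f i) x = (\<Sum>i\<in>S. sc (f i) x)"
  by (induction S rule: infinite_finite_induct) (auto simp: sc_add_left)

lemma ip_zero_left[simp]: "ip 0 y = 0"
  using ip_add_left[of 0 0 y] by simp
lemma ip_minus_left: "ip (- x) y = - ip x y"
  using minus_unique[of "ip x y" "ip (-x) y"] ip_add_left[of x "-x" y] by simp
lemma ip_diff_left: "ip (x - y) z = ip x z - ip y z"
  using ip_add_left[of x "-y" z] ip_minus_left by simp
lemma ip_sum_left: "ip (\<Sum>i\<in>S. f i) y = (\<Sum>i\<in>S. ip (f i) y)"
  by (induction S rule: infinite_finite_induct) (auto simp: ip_add_left)
lemma cnj_ip: "cnj (ip y x) = ip x y"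
  using ip_conj[of x y] by simp
lemma ip_conj': "ip x y = cnj (ip y x)" by (rule cnj_ip[symmetric])
lemma ip_add_right: "ip x (y + z) = ip x y + ip x z"
  by (subst (1 2 3) ip_conj') (simp add: ip_add_left)
lemma ip_sc_right: "ip x (sc a y) = cnj a * ip x y"
  by (subst (1 2) ip_conj') (simp add: ip_sc_left)
lemma ip_zero_right[simp]: "ip x 0 = 0"
  by (subst ip_conj') simp
lemma ip_minus_right: "ip x (- y) = - ip x y"
  by (subst (1 2) ip_conj') (simp add: ip_minus_left)
lemma ip_diff_right: "ip x (y - z) = ip x y - ip x z"
  by (subst (1 2 3) ip_conj') (simp add: ip_diff_left)
lemma ip_sum_right: "ip x (\<Sum>i\<in>S. f i) = (\<Sum>i\<in>S. ip x (f i))"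
  by (induction S rule: infinite_finite_induct) (auto simp: ip_add_right)

lemmas ip_simps = ip_add_left ip_add_right ip_sc_left ip_sc_right ip_minus_left ip_minus_right
  ip_diff_left ip_diff_right ip_sum_left ip_sum_right

lemma ip_self_real: "ip x x = complex_of_real (nsq ip x)"
proof -
  have "Im (ip x x) = Im (cnj (ip x x))" using ip_conj[of x x] by (rule arg_cong)
  hence "Im (ip x x) = 0" by (simp del: cnj_ip)
  thus ?thesis unfolding nsq_def by (intro complex_eqI) auto
qed

lemma re_mult_cnj: "Re (z * cnj z) = (cmod z)\<^sup>2"
  by (simp only: complex_norm_square[symmetric] Re_complex_of_real)
lemma re_cnj_mult: "Re (cnj z * z) = (cmod z)\<^sup>2"
  by (simp only: mult.commute[of "cnj z"] re_mult_cnj)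

lemma nsq_nonneg: "0 \<le> nsq ip x" unfolding nsq_def by (rule ip_nonneg)
lemma hnorm_sq: "(hnorm ip x)\<^sup>2 = nsq ip x"
  unfolding hnorm_def nsq_def using ip_nonneg by simp
lemma nsq_zero_iff: "nsq ip x = 0 \<longleftrightarrow> x = 0"
  using ip_self_real ip_definite by (metis of_real_eq_0_iff ip_zero_left nsq_def zero_complex.simps(1))
lemma nsq_zero[simp]: "nsq ip 0 = 0" by (simp add: nsq_def)

lemma nsq_add: "nsq ip (x + y) = nsq ip x + nsq ip y + 2 * Re (ip x y)"
proof -
  have "ip y x = cnj (ip x y)" by (rule ip_conj)
  hence "Re (ip y x) = Re (ip x y)" by (simp del: cnj_ip)
  thus ?thesis unfolding nsq_def by (simp add: ip_add_left ip_add_right)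
qed
lemma nsq_diff: "nsq ip (x - y) = nsq ip x + nsq ip y - 2 * Re (ip x y)"
proof -
  have "ip y x = cnj (ip x y)" by (rule ip_conj)
  hence "Re (ip y x) = Re (ip x y)" by (simp del: cnj_ip)
  thus ?thesis unfolding nsq_def by (simp add: ip_diff_left ip_diff_right)
qed
lemma nsq_sc: "nsq ip (sc a x) = (cmod a)\<^sup>2 * nsq ip x"
proof -
  have "ip (sc a x) (sc a x) = (a * cnj a) * ip x x" by (simp add: ip_sc_left ip_sc_right)
  also have "a * cnj a = complex_of_real ((cmod a)\<^sup>2)" using complex_norm_square[of a] by simp
  finally show ?thesis unfolding nsq_def using ip_self_real[of x]
    by (metis Re_complex_of_real nsq_def of_real_mult)
qed
lemma nsq_orth: "ip x y = 0 \<Longrightarrow> nsq ip (x + y) = nsq ip x + nsq ip y"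
  by (simp add: nsq_add)

lemma cauchy_schwarz: "(cmod (ip x y))\<^sup>2 \<le> nsq ip x * nsq ip y"
proof (cases "y = 0")
  case True thus ?thesis by simp
next
  case False
  define Y where "Y = nsq ip y"
  have Y: "Y > 0" using False nsq_zero_iff nsq_nonneg unfolding Y_def by (metis less_eq_real_def)
  define p where "p = ip x y"
  define t where "t = p / complex_of_real Y"
  have "0 \<le> nsq ip (x - sc t y)" by (rule nsq_nonneg)
  also have "\<dots> = nsq ip x + (cmod t)\<^sup>2 * Y - 2 * Re (cnj t * p)"
    by (simp add: nsq_diff nsq_sc ip_sc_right Y_def p_def)
  also have "(cmod t)\<^sup>2 * Y = (cmod p)\<^sup>2 / Y" using Y
    by (simp add: t_def norm_divide power_divide power2_eq_square)
  also have "cnj t * p = complex_of_real ((cmod p)\<^sup>2 / Y)"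
    using complex_norm_square[of p] by (simp add: t_def mult.commute)
  finally have "0 \<le> nsq ip x - (cmod p)\<^sup>2 / Y" by simp
  hence "(cmod p)\<^sup>2 / Y \<le> nsq ip x" by simp
  thus ?thesis using Y unfolding p_def Y_def by (simp add: divide_le_eq)
qed

lemma cs_re: "\<bar>Re (ip x y)\<bar> \<le> sqrt (nsq ip x) * sqrt (nsq ip y)"
proof -
  have "\<bar>Re (ip x y)\<bar> \<le> cmod (ip x y)" by (rule abs_Re_le_cmod)
  also have "\<dots> = sqrt ((cmod (ip x y))\<^sup>2)" by simp
  also have "\<dots> \<le> sqrt (nsq ip x * nsq ip y)" using cauchy_schwarz real_sqrt_le_mono by blast
  finally show ?thesis by (simp add: real_sqrt_mult)
qed

lemma nsq_add_bounds:
  "(sqrt (nsq ip x) - sqrt (nsq ip y))\<^sup>2 \<le> nsq ip (x + y)"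
  "nsq ip (x + y) \<le> (sqrt (nsq ip x) + sqrt (nsq ip y))\<^sup>2"
proof -
  define a where "a = sqrt (nsq ip x)"
  define b where "b = sqrt (nsq ip y)"
  have ab: "nsq ip x = a * a" "nsq ip y = b * b" unfolding a_def b_def
    using real_sqrt_mult_self nsq_nonneg by (metis real_sqrt_abs2 abs_of_nonneg)+
  have c: "\<bar>Re (ip x y)\<bar> \<le> a * b" unfolding a_def b_def by (rule cs_re)
  have e: "nsq ip (x + y) = a * a + b * b + 2 * Re (ip x y)" using nsq_add ab by simp
  have "(a - b)\<^sup>2 = a * a + b * b - 2 * (a * b)" "(a + b)\<^sup>2 = a * a + b * b + 2 * (a * b)"
    by (simp_all add: power2_eq_square algebra_simps)
  then show "(sqrt (nsq ip x) - sqrt (nsq ip y))\<^sup>2 \<le> nsq ip (x + y)"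
    "nsq ip (x + y) \<le> (sqrt (nsq ip x) + sqrt (nsq ip y))\<^sup>2"
    unfolding a_def[symmetric] b_def[symmetric] e using c by linarith+
qed

end


lemma orth_proj_unique:
  assumes sub: "\<And>a b. a \<in> M \<Longrightarrow> b \<in> M \<Longrightarrow> a - b \<in> M"
    and y: "y \<in> M" "\<forall>m\<in>M. ip (x - y) m = 0"
    and P: "\<And>a b c. ip (a - b) c = ip a c - ip b c"
    and D: "\<And>d. ip d d = 0 \<Longrightarrow> d = 0"
  shows "orth_proj ip M (x::'a::ab_group_add) = y"
  unfolding orth_proj_def
proof (rule the_equality)
  show "y \<in> M \<and> (\<forall>m\<in>M. ip (x - y) m = 0)" using y by blast
  fix z assume z: "z \<in> M \<and> (\<forall>m\<in>M. ip (x - z) m = 0)"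
  have d: "z - y \<in> M" using sub z y by blast
  have "ip (z - y) (z - y) = ip (x - y) (z - y) - ip (x - z) (z - y)"
    using P[of "x - y" "x - z" "z - y"] by (simp add: algebra_simps)
  also have "\<dots> = 0" using d y z by simp
  finally show "z = y" using D by (metis eq_iff_diff_eq_0)
qed

locale onbs = chs sc ip for sc :: "complex \<Rightarrow> 'a::ab_group_add \<Rightarrow> 'a" and ip +
  fixes v :: "nat \<Rightarrow> 'a"
  assumes onb: "orthonormal_basis ip v"
begin

lemma ip_v: "ip (v i) (v j) = (if i = j then 1 else 0)"
  using onb unfolding orthonormal_basis_def by blast
lemma onb_complete: "(\<And>j. ip f (v j) = 0) \<Longrightarrow> f = 0"
  using onb unfolding orthonormal_basis_def by blast
lemma nsq_v[simp]: "nsq ip (v j) = 1" by (simp add: nsq_def ip_v)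

lemma ip_comb_v: "finite S \<Longrightarrow> ip (\<Sum>j\<in>S. sc (a j) (v j)) (v k) = (if k \<in> S then a k else 0)"
  by (simp add: ip_sum_left ip_sc_left ip_v if_distrib sum.delta cong: if_cong)
lemma ip_v_comb: "finite S \<Longrightarrow> ip (v k) (\<Sum>j\<in>S. sc (a j) (v j)) = (if k \<in> S then cnj (a k) else 0)"
  by (subst ip_conj') (simp add: ip_comb_v)

lemma nsq_comb_v: "finite S \<Longrightarrow> nsq ip (\<Sum>j\<in>S. sc (a j) (v j)) = (\<Sum>j\<in>S. (cmod (a j))\<^sup>2)"
proof -
  assume S: "finite S"
  have h: "ip (\<Sum>j\<in>S. sc (a j) (v j)) (\<Sum>j\<in>S. sc (a j) (v j)) = (\<Sum>j\<in>S. cnj (a j) * a j)"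
    by (auto simp: ip_sum_right ip_sc_right ip_comb_v S intro!: sum.cong)
  show ?thesis unfolding nsq_def h Re_sum re_cnj_mult by (rule refl)
qed

lemma re_ip_f_comb: "Re (ip f (\<Sum>j\<in>S. sc (ip f (v j)) (v j))) = (\<Sum>j\<in>S. (cmod (ip f (v j)))\<^sup>2)"
  by (simp only: ip_sum_right ip_sc_right Re_sum re_cnj_mult)

lemma bessel_eq: "finite S \<Longrightarrow> nsq ip (f - (\<Sum>j\<in>S. sc (ip f (v j)) (v j))) = nsq ip f - (\<Sum>j\<in>S. (cmod (ip f (v j)))\<^sup>2)"
  by (simp add: nsq_diff nsq_comb_v re_ip_f_comb)

lemma bessel: "finite S \<Longrightarrow> (\<Sum>j\<in>S. (cmod (ip f (v j)))\<^sup>2) \<le> nsq ip f"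
  using bessel_eq[of S f] nsq_nonneg[of "f - (\<Sum>j\<in>S. sc (ip f (v j)) (v j))"] by simp

lemma nsq_minus: "nsq ip (- x) = nsq ip x"
  by (simp add: nsq_def ip_minus_left ip_minus_right)

lemma parseval: "(\<lambda>j. (cmod (ip f (v j)))\<^sup>2) sums nsq ip f"
proof -
  define c where "c j = (cmod (ip f (v j)))\<^sup>2" for j
  define s where "s n = (\<Sum>j<n. sc (ip f (v j)) (v j))" for n
  have summ: "summable c"
    by (rule summableI_nonneg_bounded[of _ "nsq ip f"]) (auto simp: c_def bessel)
  have diff: "nsq ip (s m - s n) = (\<Sum>k=n..<m. c k)" if "n \<le> m" for m n
  proof -
    have "s m = s n + (\<Sum>j=n..<m. sc (ip f (v j)) (v j))"
      unfolding s_def using that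
      by (metis atLeast0LessThan sum.atLeastLessThan_concat zero_le)
    thus ?thesis by (simp add: nsq_comb_v c_def)
  qed
  have cauchy: "\<forall>e>0. \<exists>M. \<forall>m\<ge>M. \<forall>n\<ge>M. hnorm ip (s m - s n) < e"
  proof (intro allI impI)
    fix e :: real assume e: "e > 0"
    obtain M where M: "\<And>m n. m \<ge> M \<Longrightarrow> norm (\<Sum>k=m..n. c k) < e\<^sup>2"
      using summable_partial_sum_bound[OF summ, of "e\<^sup>2"] e by auto
    have b: "hnorm ip (s m - s n) < e" if "M \<le> n" "n \<le> m" for m n
    proof (cases "n = m")
      case True thus ?thesis using e by (simp add: hnorm_def nsq_def[symmetric])
    next
      case False
      hence "{n..<m} = {n..m - 1}" using that by auto
      hence "nsq ip (s m - s n) = (\<Sum>k=n..m-1. c k)" using diff[OF that(2)] by simp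
      also have "\<dots> < e\<^sup>2" using M that(1) c_def by (metis real_norm_def abs_of_nonneg sum_nonneg zero_le_power2)
      finally have "sqrt (nsq ip (s m - s n)) < sqrt (e\<^sup>2)" by (rule real_sqrt_less_mono)
      thus ?thesis using e by (simp add: hnorm_def nsq_def)
    qed
    show "\<exists>M. \<forall>m\<ge>M. \<forall>n\<ge>M. hnorm ip (s m - s n) < e"
    proof (intro exI allI impI)
      fix m n assume "M \<le> m" "M \<le> n"
      show "hnorm ip (s m - s n) < e"
      proof (cases "n \<le> m")
        case True thus ?thesis using b \<open>M \<le> n\<close> by blast
      next
        case False
        hence "hnorm ip (s n - s m) < e" using b \<open>M \<le> m\<close> by simp
        moreover have "s m - s n = - (s n - s m)" by simp
        ultimately show ?thesis using nsq_minus unfolding hnorm_def nsq_def[symmetric] by metis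
      qed
    qed
  qed
  obtain x where x: "(\<lambda>n. hnorm ip (s n - x)) \<longlonglongrightarrow> 0" using complete[OF cauchy] by blast
  have fx: "f = x"
  proof -
    have "ip (f - x) (v k) = 0" for k
    proof -
      have le: "cmod (ip (f - x) (v k)) \<le> hnorm ip (s n - x)" if "n > k" for n
      proof -
        have "ip (s n) (v k) = ip f (v k)" unfolding s_def using that by (simp add: ip_comb_v)
        hence "ip (f - x) (v k) = ip (s n - x) (v k)" by (simp add: ip_diff_left)
        moreover have "(cmod (ip (s n - x) (v k)))\<^sup>2 \<le> nsq ip (s n - x)"
          using cauchy_schwarz[of "s n - x" "v k"] by simp
        ultimately show ?thesis unfolding hnorm_def nsq_def[symmetric]
          by (metis norm_ge_zero real_le_rsqrt)
      qed
      have "cmod (ip (f - x) (v k)) \<le> 0"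
        by (rule LIMSEQ_le_const[OF x]) (use le in \<open>auto intro!: exI[of _ "Suc k"]\<close>)
      thus ?thesis by simp
    qed
    hence "f - x = 0" by (rule onb_complete)
    thus ?thesis by simp
  qed
  have "(\<lambda>n. (hnorm ip (s n - x))\<^sup>2) \<longlonglongrightarrow> 0" using tendsto_power[OF x, of 2] by simp
  hence "(\<lambda>n. nsq ip (f - s n)) \<longlonglongrightarrow> 0"
    using fx by (simp add: hnorm_sq nsq_minus[of "s _ - x", symmetric])
  moreover have "nsq ip (f - s n) = nsq ip f - (\<Sum>j<n. c j)" for n
    unfolding s_def c_def by (rule bessel_eq) simp
  ultimately have "(\<lambda>n. nsq ip f - (\<Sum>j<n. c j)) \<longlonglongrightarrow> 0" by simp
  hence "(\<lambda>n. nsq ip f - (nsq ip f - (\<Sum>j<n. c j))) \<longlonglongrightarrow> nsq ip f - 0"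
    by (intro tendsto_diff tendsto_const)
  thus ?thesis unfolding sums_def c_def by simp
qed

end


context chs begin
lemma sc_diff_left: "sc (a - b) x = sc a x - sc b x"
  using sc_add_left[of a "-b" x] sc_minus_left by simp
lemma nsq_sc_ip: "ip x y = 0 \<Longrightarrow> ip y x = 0"
  by (subst ip_conj') simp
end

context onbs begin

definition P1 :: "nat \<Rightarrow> 'a \<Rightarrow> 'a" where
  "P1 N x = (\<Sum>j<N. sc (ip x (v j)) (v j))"

lemma P1_lsum: "lsum sc N (\<lambda>j. ip x (v j)) v = P1 N x"
  unfolding lsum_def P1_def ..

lemma fspan_sub: "a \<in> fspan sc N v \<Longrightarrow> b \<in> fspan sc N v \<Longrightarrow> a - b \<in> fspan sc N v"
proof -
  assume "a \<in> fspan sc N v" "b \<in> fspan sc N v"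
  then obtain c d where "a = lsum sc N c v" "b = lsum sc N d v" unfolding fspan_def by blast
  hence "a - b = lsum sc N (\<lambda>j. c j - d j) v"
    unfolding lsum_def by (simp add: sc_diff_left sum_subtractf)
  thus ?thesis unfolding fspan_def by blast
qed

lemma P1_in: "P1 N x \<in> fspan sc N v"
  unfolding fspan_def P1_lsum[symmetric] by blast

lemma ip_P1_v: "ip (P1 N x) (v k) = (if k < N then ip x (v k) else 0)"
  unfolding P1_def by (simp add: ip_comb_v)

lemma ip_span_v: "m \<in> fspan sc N v \<Longrightarrow> k \<ge> N \<Longrightarrow> ip m (v k) = 0"
  unfolding fspan_def lsum_def by (auto simp: ip_comb_v)

lemma ip_res_span: "m \<in> fspan sc N v \<Longrightarrow> ip (x - P1 N x) m = 0"
proof -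
  assume "m \<in> fspan sc N v"
  then obtain c where m: "m = (\<Sum>j<N. sc (c j) (v j))" unfolding fspan_def lsum_def by blast
  have "ip (x - P1 N x) (v j) = 0" if "j < N" for j
    using that by (simp add: ip_diff_left ip_P1_v)
  thus ?thesis unfolding m by (simp add: ip_sum_right ip_sc_right)
qed

lemma orth_proj_P1: "orth_proj ip (fspan sc N v) x = P1 N x"
  by (rule orth_proj_unique[OF fspan_sub P1_in _ ip_diff_left ip_definite])
     (auto simp: ip_res_span)

lemma res_in_oc: "x - P1 N x \<in> orth_compl ip (fspan sc N v)"
  unfolding orth_compl_def using ip_res_span by blast

lemma oc_span: "m \<in> orth_compl ip (fspan sc N v) \<Longrightarrow> a \<in> fspan sc N v \<Longrightarrow> ip a m = 0"
  unfolding orth_compl_def by (auto intro: nsq_sc_ip)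

lemma orth_proj_P2: "orth_proj ip (orth_compl ip (fspan sc N v)) x = x - P1 N x"
proof (rule orth_proj_unique[OF _ res_in_oc _ ip_diff_left ip_definite])
  show "a - b \<in> orth_compl ip (fspan sc N v)" if "a \<in> orth_compl ip (fspan sc N v)"
      "b \<in> orth_compl ip (fspan sc N v)" for a b
    using that unfolding orth_compl_def by (simp add: ip_diff_left)
  show "\<forall>m\<in>orth_compl ip (fspan sc N v). ip (x - (x - P1 N x)) m = 0"
    using oc_span P1_in by simp
qed

lemma P1_add: "P1 N (x + y) = P1 N x + P1 N y"
  unfolding P1_def by (simp add: ip_add_left sc_add_left sum.distrib)
lemma P1_sc: "P1 N (sc a x) = sc a (P1 N x)"
  unfolding P1_def by (simp add: ip_sc_left sc_sum_right sc_assoc)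
lemma P1_zero[simp]: "P1 N 0 = 0"
  unfolding P1_def by simp
lemma P1_sum: "P1 N (\<Sum>i\<in>S. f i) = (\<Sum>i\<in>S. P1 N (f i))"
  by (induction S rule: infinite_finite_induct) (auto simp: P1_add)
lemma P1_diff: "P1 N (x - y) = P1 N x - P1 N y"
  unfolding P1_def by (simp add: ip_diff_left sc_diff_left sum_subtractf)
lemma sc_if01: "sc (if P then 1 else 0) x = (if P then x else 0)" by simp
lemma P1_v: "P1 N (v k) = (if k < N then v k else 0)"
  unfolding P1_def ip_v sc_if01 by (simp add: sum.delta')

lemma ip_P1_res: "ip (P1 N x) (y - P1 N y) = 0"
  using nsq_sc_ip[OF ip_res_span[OF P1_in]] .
lemma ip_res_P1: "ip (y - P1 N y) (P1 N x) = 0"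
  using ip_res_span[OF P1_in] .

lemma nsq_split: "nsq ip x = nsq ip (P1 N x) + nsq ip (x - P1 N x)"
  using nsq_orth[OF ip_P1_res[of N x x]] by simp

lemma nsq_P1: "nsq ip (P1 N x) = (\<Sum>j<N. (cmod (ip x (v j)))\<^sup>2)"
  unfolding P1_def by (simp add: nsq_comb_v)

lemma ip_res_v: "ip (x - P1 N x) (v k) = (if k < N then 0 else ip x (v k))"
  by (simp add: ip_diff_left ip_P1_v)

lemma ip_P1_P1: "ip (P1 N x) (P1 N y) = ip x (P1 N y)"
proof -
  have "ip x (P1 N y) = ip (P1 N x + (x - P1 N x)) (P1 N y)" by simp
  also have "\<dots> = ip (P1 N x) (P1 N y)" by (simp only: ip_add_left ip_res_P1 add_0_right)
  finally show ?thesis by (rule sym)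
qed
lemma ip_res_res: "ip (x - P1 N x) (y - P1 N y) = ip x (y - P1 N y)"
proof -
  have "ip x (y - P1 N y) = ip (P1 N x + (x - P1 N x)) (y - P1 N y)" by simp
  also have "\<dots> = ip (x - P1 N x) (y - P1 N y)" by (simp only: ip_add_left ip_P1_res add_0_left)
  finally show ?thesis by (rule sym)
qed

lemma nsq_P1_le: "nsq ip (P1 N x) \<le> nsq ip x"
  using nsq_split[of x N] nsq_nonneg[of "x - P1 N x"] by linarith
lemma nsq_res_le: "nsq ip (x - P1 N x) \<le> nsq ip x"
  using nsq_split[of x N] nsq_nonneg[of "P1 N x"] by linarith

end


lemma qform_cong: "(\<And>i. i < N \<Longrightarrow> c i = d i) \<Longrightarrow> qform N U c = qform N U d"
  unfolding qform_def by (intro arg_cong[where f=Re] sum.cong refl) auto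
lemma vnorm2_cong: "(\<And>i. i < N \<Longrightarrow> c i = d i) \<Longrightarrow> vnorm2 N c = vnorm2 N d"
  unfolding vnorm2_def by (intro sum.cong refl) auto
lemma vnorm2_nonneg: "0 \<le> vnorm2 N c"
  unfolding vnorm2_def by (intro sum_nonneg) auto
lemma vnorm2_cnj: "vnorm2 N (\<lambda>j. cnj (c j)) = vnorm2 N c"
  unfolding vnorm2_def by simp

context chs begin

lemma qform_gram: "qform N (gram ip x) c = nsq ip (\<Sum>i<N. sc (cnj (c i)) (x i))"
proof -
  have "ip (\<Sum>i<N. sc (cnj (c i)) (x i)) (\<Sum>i<N. sc (cnj (c i)) (x i))
      = (\<Sum>i<N. (\<Sum>j<N. ip (x i) (x j) * c j) * cnj (c i))"
    by (simp add: ip_sum_left ip_sum_right ip_sc_left ip_sc_right sum_distrib_left sum_distrib_right mult_ac)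
       (rule sum.swap)
  thus ?thesis unfolding qform_def nsq_def gram_def by simp
qed

lemma qform_gram_nonneg: "0 \<le> qform N (gram ip x) c"
  by (simp add: qform_gram nsq_nonneg)

end

context onbs begin
lemma P1_P1: "P1 N (P1 N x) = P1 N x"
  unfolding P1_def[of N "P1 N x"] ip_P1_v by (simp add: P1_def)
end

locale setting = onbs sc ip v for sc :: "complex \<Rightarrow> 'a::ab_group_add \<Rightarrow> 'a" and ip v +
  fixes w :: "nat \<Rightarrow> 'a" and N :: nat
  assumes unit: "\<And>j. nsq ip (w j) = 1" and Npos: "N \<ge> 1"
    and basis: "is_basis_of sc N (\<lambda>j. P1 N (w j)) (fspan sc N v)"
begin

definition U1 where "U1 = gram ip (\<lambda>j. P1 N (w j))"
definition U2 where "U2 = gram ip (\<lambda>j. w j - P1 N (w j))"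
definition BB where "BB = (\<lambda>j. if j < N then w j else v j)"
definition BBt where "BBt = (\<lambda>j. if j < N then P1 N (w j) else v j)"

definition X1 where "X1 c = (\<Sum>j<N. sc (c j) (w j))"

lemma P1_X1: "P1 N (X1 c) = (\<Sum>j<N. sc (c j) (P1 N (w j)))"
  unfolding X1_def by (simp add: P1_sum P1_sc)
lemma res_X1: "X1 c - P1 N (X1 c) = (\<Sum>j<N. sc (c j) (w j - P1 N (w j)))"
  unfolding P1_X1 unfolding X1_def by (simp add: sc_diff_right sum_subtractf)

lemma nsq_P1_X1: "nsq ip (P1 N (X1 c)) = qform N U1 (\<lambda>j. cnj (c j))"
  unfolding U1_def qform_gram P1_X1 by simp
lemma nsq_res_X1: "nsq ip (X1 c - P1 N (X1 c)) = qform N U2 (\<lambda>j. cnj (c j))"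
  unfolding U2_def qform_gram res_X1 by simp

lemma sum_if_lt: "(\<Sum>j<n. if j < N then f j else 0) = (\<Sum>j<N. if j < n then f j else (0::'b::comm_monoid_add))"
proof -
  have "(\<Sum>j<n. if j < N then f j else 0) = (\<Sum>j\<in>{j\<in>{..<n}. j < N}. f j)"
    by (rule sum.inter_filter[symmetric]) simp
  also have "{j\<in>{..<n}. j < N} = {j\<in>{..<N}. j < n}" by auto
  also have "(\<Sum>j\<in>\<dots>. f j) = (\<Sum>j<N. if j < n then f j else 0)"
    by (rule sum.inter_filter) simp
  finally show ?thesis .
qed

definition beta where "beta n a = (\<Sum>j<n. sc (if j < N then 0 else a j) (v j))"

lemma P1_beta: "P1 N (beta n a) = 0"
  unfolding beta_def by (simp add: P1_sum P1_sc P1_v) (auto intro!: sum.neutral)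

lemma lsum_BB: "lsum sc n a BB = X1 (\<lambda>j. if j < n then a j else 0) + beta n a"
proof -
  have "lsum sc n a BB = (\<Sum>j<n. (if j < N then sc (a j) (w j) else 0)) + beta n a"
    unfolding lsum_def BB_def beta_def sum.distrib[symmetric] by (intro sum.cong) auto
  also have "(\<Sum>j<n. (if j < N then sc (a j) (w j) else 0)) = X1 (\<lambda>j. if j < n then a j else 0)"
    unfolding sum_if_lt X1_def by (intro sum.cong) auto
  finally show ?thesis .
qed

lemma lsum_BBt: "lsum sc n a BBt = P1 N (X1 (\<lambda>j. if j < n then a j else 0)) + beta n a"
proof -
  have "lsum sc n a BBt = (\<Sum>j<n. (if j < N then sc (a j) (P1 N (w j)) else 0)) + beta n a"
    unfolding lsum_def BBt_def beta_def sum.distrib[symmetric] by (intro sum.cong) auto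
  also have "(\<Sum>j<n. (if j < N then sc (a j) (P1 N (w j)) else 0)) = P1 N (X1 (\<lambda>j. if j < n then a j else 0))"
    unfolding sum_if_lt P1_X1 by (intro sum.cong) auto
  finally show ?thesis .
qed

lemma nsq_beta: "nsq ip (beta n a) = (\<Sum>j<n. (cmod (a j))\<^sup>2) - vnorm2 N (\<lambda>j. cnj (if j < n then a j else 0))"
proof -
  have "nsq ip (beta n a) = (\<Sum>j<n. (cmod (if j < N then 0 else a j))\<^sup>2)"
    unfolding beta_def by (simp add: nsq_comb_v)
  moreover have "(\<Sum>j<n. (cmod (a j))\<^sup>2) = (\<Sum>j<n. (if j < N then (cmod (a j))\<^sup>2 else 0)) + (\<Sum>j<n. (cmod (if j < N then 0 else a j))\<^sup>2)"
    unfolding sum.distrib[symmetric] by (intro sum.cong) auto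
  moreover have "(\<Sum>j<n. (if j < N then (cmod (a j))\<^sup>2 else 0)) = vnorm2 N (\<lambda>j. cnj (if j < n then a j else 0))"
    unfolding sum_if_lt vnorm2_def by (intro sum.cong) auto
  ultimately show ?thesis by simp
qed

lemma decomp_BB:
  fixes n :: nat and a :: "nat \<Rightarrow> complex"
  defines "c \<equiv> (\<lambda>j. if j < n then a j else 0)"
  shows "nsq ip (lsum sc n a BB) = qform N U1 (\<lambda>j. cnj (c j)) + nsq ip ((X1 c - P1 N (X1 c)) + beta n a)"
proof -
  have x: "lsum sc n a BB = X1 c + beta n a" unfolding c_def by (rule lsum_BB)
  have p: "P1 N (lsum sc n a BB) = P1 N (X1 c)" unfolding x by (simp add: P1_add P1_beta)
  have r: "lsum sc n a BB - P1 N (lsum sc n a BB) = (X1 c - P1 N (X1 c)) + beta n a"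
    unfolding p unfolding x by simp
  show ?thesis using nsq_split[of "lsum sc n a BB" N] unfolding r unfolding p nsq_P1_X1 .
qed

lemma decomp_BBt:
  fixes n :: nat and a :: "nat \<Rightarrow> complex"
  defines "c \<equiv> (\<lambda>j. if j < n then a j else 0)"
  shows "nsq ip (lsum sc n a BBt) = qform N U1 (\<lambda>j. cnj (c j)) + nsq ip (beta n a)"
proof -
  have x: "lsum sc n a BBt = P1 N (X1 c) + beta n a" unfolding c_def by (rule lsum_BBt)
  have p: "P1 N (lsum sc n a BBt) = P1 N (X1 c)" unfolding x by (simp add: P1_add P1_beta P1_P1)
  have r: "lsum sc n a BBt - P1 N (lsum sc n a BBt) = beta n a"
    unfolding p unfolding x by simp
  show ?thesis using nsq_split[of "lsum sc n a BBt" N] unfolding r unfolding p nsq_P1_X1 .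
qed

end


definition trunc :: "nat \<Rightarrow> (nat \<Rightarrow> complex) \<Rightarrow> nat \<Rightarrow> complex" where
  "trunc N c = (\<lambda>j. if j < N then c j else 0)"
definition KK :: "nat \<Rightarrow> (nat \<Rightarrow> complex) set" where
  "KK N = PiE UNIV (\<lambda>j. if j < N then cball 0 1 else {0})"

lemma compact_KK: "compact (KK N)"
  unfolding KK_def
  using compactin_PiE[of "\<lambda>_. euclidean" UNIV "\<lambda>j::nat. if j < N then cball (0::complex) 1 else {0}"]
  by (simp add: euclidean_product_topology)

lemma cont_coord[continuous_intros]: "continuous_on S (\<lambda>c::nat \<Rightarrow> complex. c j)"
  by (rule continuous_on_subset[OF continuous_on_product_coordinates]) simp

lemma cont_vnorm2[continuous_intros]: "continuous_on S (vnorm2 N)"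
  unfolding vnorm2_def by (intro continuous_intros)

lemma cont_qform[continuous_intros]: "continuous_on S (qform N U)"
  unfolding qform_def by (intro continuous_intros)

lemma vnorm2_trunc[simp]: "vnorm2 N (trunc N c) = vnorm2 N c"
  unfolding vnorm2_def trunc_def by simp
lemma qform_trunc[simp]: "qform N U (trunc N c) = qform N U c"
  unfolding qform_def trunc_def by simp

lemma trunc_KK: "vnorm2 N c \<le> 1 \<Longrightarrow> trunc N c \<in> KK N"
proof -
  assume h: "vnorm2 N c \<le> 1"
  have "cmod (c j) \<le> 1" if "j < N" for j
  proof -
    have "(cmod (c j))\<^sup>2 \<le> vnorm2 N c"
      unfolding vnorm2_def using that by (intro member_le_sum) auto
    hence "(cmod (c j))\<^sup>2 \<le> 1\<^sup>2" using h by simp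
    thus ?thesis by (rule power2_le_imp_le) simp
  qed
  thus ?thesis unfolding KK_def trunc_def by (auto simp: PiE_def Pi_def)
qed

lemma attains_max_ball:
  fixes f :: "(nat \<Rightarrow> complex) \<Rightarrow> real"
  assumes "continuous_on UNIV f" "\<And>c. f (trunc N c) = f c"
  shows "\<exists>d. vnorm2 N d \<le> 1 \<and> (\<forall>c. vnorm2 N c \<le> 1 \<longrightarrow> f c \<le> f d)"
proof -
  let ?S = "KK N \<inter> {c. vnorm2 N c \<le> 1}"
  have "compact ?S"
    by (intro compact_Int_closed compact_KK closed_Collect_le continuous_intros)
  moreover have "(\<lambda>j. 0) \<in> ?S" unfolding KK_def vnorm2_def by auto
  moreover have "continuous_on ?S f" using assms(1) continuous_on_subset by blast
  ultimately obtain d where d: "d \<in> ?S" "\<forall>y\<in>?S. f y \<le> f d"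
    using continuous_attains_sup[of ?S f] by blast
  show ?thesis
  proof (intro exI conjI allI impI)
    show "vnorm2 N d \<le> 1" using d by auto
    fix c assume "vnorm2 N c \<le> 1"
    hence "trunc N c \<in> ?S" using trunc_KK by auto
    thus "f c \<le> f d" using d assms(2) by metis
  qed
qed

lemma attains_max_sphere:
  fixes f :: "(nat \<Rightarrow> complex) \<Rightarrow> real"
  assumes "continuous_on UNIV f" "\<And>c. f (trunc N c) = f c" "N \<ge> 1"
  shows "\<exists>d. vnorm2 N d = 1 \<and> (\<forall>c. vnorm2 N c = 1 \<longrightarrow> f c \<le> f d)"
proof -
  let ?S = "KK N \<inter> {c. vnorm2 N c = 1}"
  have "compact ?S"
    by (intro compact_Int_closed compact_KK closed_Collect_eq continuous_intros)
  moreover have "(\<lambda>j. if j = 0 then 1 else 0) \<in> ?S"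
  proof -
    have "vnorm2 N (\<lambda>j. if j = 0 then 1 else 0) = (\<Sum>j<N. if j = 0 then 1 else 0)"
      unfolding vnorm2_def by (intro sum.cong) auto
    also have "\<dots> = 1" using assms(3) by simp
    finally show ?thesis unfolding KK_def using assms(3) by (auto simp: PiE_def Pi_def)
  qed
  hence "?S \<noteq> {}" by blast
  moreover have "continuous_on ?S f" using assms(1) continuous_on_subset by blast
  ultimately obtain d where d: "d \<in> ?S" "\<forall>y\<in>?S. f y \<le> f d"
    using continuous_attains_sup[of ?S f] by blast
  show ?thesis
  proof (intro exI conjI allI impI)
    show "vnorm2 N d = 1" using d by auto
    fix c assume "vnorm2 N c = 1"
    hence "trunc N c \<in> ?S" using trunc_KK by auto
    thus "f c \<le> f d" using d assms(2) by metis
  qed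
qed

lemma attains_min_ball:
  fixes f :: "(nat \<Rightarrow> complex) \<Rightarrow> real"
  assumes "continuous_on UNIV f" "\<And>c. f (trunc N c) = f c"
  shows "\<exists>d. vnorm2 N d \<le> 1 \<and> (\<forall>c. vnorm2 N c \<le> 1 \<longrightarrow> f d \<le> f c)"
  using attains_max_ball[of "\<lambda>c. - f c" N] assms by (auto intro: continuous_intros)

lemma attains_min_sphere:
  fixes f :: "(nat \<Rightarrow> complex) \<Rightarrow> real"
  assumes "continuous_on UNIV f" "\<And>c. f (trunc N c) = f c" "N \<ge> 1"
  shows "\<exists>d. vnorm2 N d = 1 \<and> (\<forall>c. vnorm2 N c = 1 \<longrightarrow> f d \<le> f c)"
  using attains_max_sphere[of "\<lambda>c. - f c" N] assms by (auto intro: continuous_intros)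


definition hf :: "nat \<Rightarrow> (nat \<Rightarrow> nat \<Rightarrow> complex) \<Rightarrow> (nat \<Rightarrow> complex) \<Rightarrow> (nat \<Rightarrow> complex) \<Rightarrow> complex" where
  "hf N M x y = (\<Sum>i<N. \<Sum>j<N. M i j * x j * cnj (y i))"

definition herm :: "nat \<Rightarrow> (nat \<Rightarrow> nat \<Rightarrow> complex) \<Rightarrow> bool" where
  "herm N U \<longleftrightarrow> (\<forall>i<N. \<forall>j<N. U i j = cnj (U j i))"

lemma hf_add_left: "hf N M (\<lambda>j. x j + y j) z = hf N M x z + hf N M y z"
  unfolding hf_def by (simp only: distrib_left distrib_right sum.distrib)
lemma hf_add_right: "hf N M z (\<lambda>j. x j + y j) = hf N M z x + hf N M z y"
  unfolding hf_def by (simp only: complex_cnj_add distrib_left distrib_right sum.distrib)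
lemma hf_scale_left: "hf N M (\<lambda>j. a * x j) z = a * hf N M x z"
proof -
  have "M i j * (a * x j) * cnj (z i) = a * (M i j * x j * cnj (z i))" for i j by (simp only: mult_ac)
  thus ?thesis unfolding hf_def by (simp only: sum_distrib_left)
qed
lemma hf_scale_right: "hf N M z (\<lambda>j. a * x j) = cnj a * hf N M z x"
proof -
  have "M i j * z j * cnj (a * x i) = cnj a * (M i j * z j * cnj (x i))" for i j by (simp only: complex_cnj_mult mult_ac)
  thus ?thesis unfolding hf_def by (simp only: sum_distrib_left)
qed

lemma hf_herm: "herm N M \<Longrightarrow> hf N M x y = cnj (hf N M y x)"
proof -
  assume h: "herm N M"
  have "cnj (hf N M y x) = (\<Sum>i<N. \<Sum>j<N. cnj (M i j) * cnj (y j) * x i)"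
    unfolding hf_def by (simp only: cnj_sum complex_cnj_mult complex_cnj_cnj)
  also have "\<dots> = (\<Sum>i<N. \<Sum>j<N. M j i * cnj (y j) * x i)"
  proof -
    have h': "cnj (M i j) = M j i" if "i < N" "j < N" for i j
    proof -
      have "M j i = cnj (M i j)" using h that unfolding herm_def by blast
      thus ?thesis by (rule sym)
    qed
    show ?thesis by (intro sum.cong refl) (simp add: h')
  qed
  also have "\<dots> = (\<Sum>j<N. \<Sum>i<N. M j i * cnj (y j) * x i)" by (rule sum.swap)
  also have "\<dots> = hf N M x y" unfolding hf_def by (simp only: mult_ac)
  finally show ?thesis by simp
qed

lemma qform_hf: "qform N U x = Re (hf N U x x)"
  unfolding qform_def hf_def by (simp add: sum_distrib_right)

lemma re_mc: "Re (complex_of_real L * z * cnj z) = L * (cmod z)\<^sup>2"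
proof -
  have e: "complex_of_real L * z * cnj z = complex_of_real (L * (cmod z)\<^sup>2)"
    by (simp only: mult.assoc complex_norm_square[symmetric] of_real_mult)
  show ?thesis unfolding e by (rule Re_complex_of_real)
qed

definition shiftM :: "real \<Rightarrow> (nat \<Rightarrow> nat \<Rightarrow> complex) \<Rightarrow> nat \<Rightarrow> nat \<Rightarrow> complex" where
  "shiftM L U i j = (if i = j then complex_of_real L else 0) - U i j"

lemma hf_shift: "Re (hf N (shiftM L U) x x) = L * vnorm2 N x - qform N U x"
proof -
  have "hf N (shiftM L U) x x = (\<Sum>i<N. complex_of_real L * x i * cnj (x i)) - hf N U x x"
  proof -
    have e: "shiftM L U i j * x j * cnj (x i) = (if i = j then complex_of_real L * x i * cnj (x i) else 0) - U i j * x j * cnj (x i)" for i j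
      by (simp add: shiftM_def algebra_simps)
    show ?thesis unfolding hf_def e sum_subtractf by (simp add: sum.delta sum.delta')
  qed
  moreover have "Re (\<Sum>i<N. complex_of_real L * x i * cnj (x i)) = L * vnorm2 N x"
    unfolding vnorm2_def by (simp only: Re_sum re_mc sum_distrib_left)
  ultimately show ?thesis by (simp add: qform_hf)
qed


lemma herm_shift: "herm N U \<Longrightarrow> herm N (shiftM L U)"
proof (unfold herm_def, intro allI impI)
  fix i j assume H: "\<forall>i<N. \<forall>j<N. U i j = cnj (U j i)" and ij: "i < N" "j < N"
  hence "U i j = cnj (U j i)" by blast
  hence "(if i = j then complex_of_real L else 0) - U i j = (if i = j then complex_of_real L else 0) - cnj (U j i)" by (rule arg_cong)
  thus "shiftM L U i j = cnj (shiftM L U j i)" unfolding shiftM_def by (simp add: eq_commute[of j i])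
qed

lemma max_eigvec:
  assumes H: "herm N U" and le: "\<And>d. qform N U d \<le> L * vnorm2 N d"
    and eq: "qform N U c = L * vnorm2 N c"
  shows "\<And>i. i < N \<Longrightarrow> (\<Sum>j<N. U i j * c j) = complex_of_real L * c i"
proof -
  define M where "M = shiftM L U"
  have HM: "herm N M" unfolding M_def using H by (rule herm_shift)
  define D where "D x = Re (hf N M x x)" for x
  have Dnn: "D x \<ge> 0" for x unfolding D_def M_def hf_shift using le[of x] by simp
  have Dc: "D c = 0" unfolding D_def M_def hf_shift using eq by simp
  define g where "g i = (\<Sum>j<N. M i j * c j)" for i
  define G where "G = (\<Sum>i<N. (cmod (g i))\<^sup>2)"
  have Gnn: "G \<ge> 0" unfolding G_def by (intro sum_nonneg) auto
  have hcg: "Re (hf N M c g) = G"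
  proof -
    have "hf N M c g = (\<Sum>i<N. g i * cnj (g i))"
      unfolding hf_def g_def by (simp add: sum_distrib_right)
    thus ?thesis unfolding G_def using re_mc[of 1] by (simp add: Re_sum)
  qed
  have hgc: "Re (hf N M g c) = G" using hf_herm[OF HM, of g c] hcg by simp
  have expand: "D (\<lambda>j. c j + complex_of_real t * g j) = 2 * t * G + t\<^sup>2 * D g" for t
  proof -
    have "hf N M (\<lambda>j. c j + complex_of_real t * g j) (\<lambda>j. c j + complex_of_real t * g j)
       = hf N M c c + complex_of_real t * hf N M c g + complex_of_real t * hf N M g c
         + complex_of_real t * complex_of_real t * hf N M g g"
      by (simp only: hf_add_left hf_scale_left hf_add_right hf_scale_right complex_cnj_complex_of_real distrib_left add.assoc mult.assoc)
    hence "D (\<lambda>j. c j + complex_of_real t * g j) = D c + t * Re (hf N M c g) + t * Re (hf N M g c) + t * t * D g"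
      unfolding D_def by simp
    thus ?thesis using Dc hcg hgc by (simp add: power2_eq_square)
  qed
  have "G = 0"
  proof (rule ccontr)
    assume "G \<noteq> 0"
    hence Gp: "G > 0" using Gnn by simp
    define a where "a = \<bar>D g\<bar> + 1"
    have a: "a > 0" "D g < a" unfolding a_def by auto
    define s where "s = G / a"
    have s: "s > 0" unfolding s_def using Gp a by simp
    have "0 \<le> D (\<lambda>j. c j + complex_of_real (- s) * g j)" by (rule Dnn)
    hence "0 \<le> 2 * (- s) * G + s\<^sup>2 * D g" unfolding expand by simp
    hence "2 * s * G \<le> s * (s * D g)" by (simp add: power2_eq_square algebra_simps)
    hence "2 * G \<le> s * D g" using s by simp
    also have "s * D g = G * (D g / a)" unfolding s_def by simp
    also have "\<dots> < G * 1" using Gp a by (intro mult_strict_left_mono) (auto simp: divide_less_eq)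
    finally show False using Gp by simp
  qed
  hence g0: "g i = 0" if "i < N" for i
    using that unfolding G_def by (subst (asm) sum_nonneg_eq_0_iff) auto
  fix i assume i: "i < N"
  have e: "M i j * c j = (if i = j then complex_of_real L * c i else 0) - U i j * c j" for j
    by (simp add: M_def shiftM_def left_diff_distrib)
  have "g i = complex_of_real L * c i - (\<Sum>j<N. U i j * c j)"
    unfolding g_def e sum_subtractf using i by (simp add: sum.delta)
  thus "(\<Sum>j<N. U i j * c j) = complex_of_real L * c i" using g0[OF i] by simp
qed

lemma eig_qform:
  assumes "\<And>i. i < N \<Longrightarrow> (\<Sum>j<N. U i j * c j) = complex_of_real r * c i"
  shows "qform N U c = r * vnorm2 N c"
proof -
  have "qform N U c = Re (\<Sum>i<N. complex_of_real r * c i * cnj (c i))"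
    unfolding qform_def using assms by (intro arg_cong[where f=Re] sum.cong) auto
  also have "\<dots> = r * vnorm2 N c" unfolding vnorm2_def by (simp only: Re_sum re_mc sum_distrib_left)
  finally show ?thesis .
qed

lemma qform_neg: "qform N (\<lambda>i j. - U i j) c = - qform N U c"
  unfolding qform_def by (simp add: sum_negf)
lemma herm_neg: "herm N U \<Longrightarrow> herm N (\<lambda>i j. - U i j)"
proof (unfold herm_def, intro allI impI)
  fix i j assume H: "\<forall>i<N. \<forall>j<N. U i j = cnj (U j i)" and ij: "i < N" "j < N"
  hence "U i j = cnj (U j i)" by blast
  hence "- U i j = - cnj (U j i)" by (rule arg_cong)
  thus "- U i j = cnj (- U j i)" unfolding complex_cnj_minus .
qed

lemma min_eigvec:
  assumes H: "herm N U" and le: "\<And>d. L * vnorm2 N d \<le> qform N U d"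
    and eq: "qform N U c = L * vnorm2 N c"
  shows "\<And>i. i < N \<Longrightarrow> (\<Sum>j<N. U i j * c j) = complex_of_real L * c i"
proof -
  fix i assume i: "i < N"
  have le': "qform N (\<lambda>i j. - U i j) d \<le> (- L) * vnorm2 N d" for d
    using le[of d] unfolding qform_neg by simp
  have eq': "qform N (\<lambda>i j. - U i j) c = (- L) * vnorm2 N c"
    using eq unfolding qform_neg by simp
  have "(\<Sum>j<N. - U i j * c j) = complex_of_real (- L) * c i"
    by (rule max_eigvec[OF herm_neg[OF H] le' eq' i])
  thus "(\<Sum>j<N. U i j * c j) = complex_of_real L * c i" by (simp add: sum_negf)
qed


lemma cmod_sum_sq_le:
  fixes a b :: "nat \<Rightarrow> complex"
  shows "(cmod (\<Sum>j\<in>S. a j * b j))\<^sup>2 \<le> (\<Sum>j\<in>S. (cmod (a j))\<^sup>2) * (\<Sum>j\<in>S. (cmod (b j))\<^sup>2)"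
proof -
  have "cmod (\<Sum>j\<in>S. a j * b j) \<le> (\<Sum>j\<in>S. cmod (a j) * cmod (b j))"
    by (rule order_trans[OF norm_sum]) (simp add: norm_mult)
  hence "(cmod (\<Sum>j\<in>S. a j * b j))\<^sup>2 \<le> (\<Sum>j\<in>S. cmod (a j) * cmod (b j))\<^sup>2"
    by (rule power_mono) simp
  also have "\<dots> \<le> (\<Sum>j\<in>S. (cmod (a j))\<^sup>2) * (\<Sum>j\<in>S. (cmod (b j))\<^sup>2)"
    by (rule Cauchy_Schwarz_ineq_sum)
  finally show ?thesis .
qed

lemma qform_scale: "qform N U (\<lambda>j. complex_of_real t * c j) = t\<^sup>2 * qform N U c"
proof -
  have "qform N U (\<lambda>j. complex_of_real t * c j) = Re (complex_of_real (t\<^sup>2) * (\<Sum>i<N. (\<Sum>j<N. U i j * c j) * cnj (c i)))"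
    unfolding qform_def by (intro arg_cong[where f=Re]) (simp add: sum_distrib_left algebra_simps power2_eq_square)
  thus ?thesis unfolding qform_def by simp
qed
lemma vnorm2_scale: "vnorm2 N (\<lambda>j. complex_of_real t * c j) = t\<^sup>2 * vnorm2 N c"
  unfolding vnorm2_def by (simp add: norm_mult power_mult_distrib sum_distrib_left)

lemma vnorm2_zero: "vnorm2 N c = 0 \<Longrightarrow> i < N \<Longrightarrow> c i = 0"
  unfolding vnorm2_def by (subst (asm) sum_nonneg_eq_0_iff) auto

lemma qform_zero: "(\<And>i. i < N \<Longrightarrow> c i = 0) \<Longrightarrow> qform N U c = 0"
  unfolding qform_def by simp

lemma sphere_bound:
  assumes "\<And>c. vnorm2 N c = 1 \<Longrightarrow> f c \<le> L"
    and "\<And>c t. f (\<lambda>j. complex_of_real t * c j) = t\<^sup>2 * f c"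
    and "\<And>c. vnorm2 N c = 0 \<Longrightarrow> f c = 0"
  shows "f c \<le> L * vnorm2 N c"
proof (cases "vnorm2 N c = 0")
  case True thus ?thesis using assms(3) by simp
next
  case False
  hence p: "vnorm2 N c > 0" using vnorm2_nonneg[of N c] by simp
  define t where "t = 1 / sqrt (vnorm2 N c)"
  have t2: "t\<^sup>2 = 1 / vnorm2 N c" unfolding t_def using p by (simp add: power_divide)
  have "vnorm2 N (\<lambda>j. complex_of_real t * c j) = 1" using p by (simp add: vnorm2_scale t2)
  hence "t\<^sup>2 * f c \<le> L" using assms(1,2) by metis
  thus ?thesis using p by (simp add: t2 field_simps)
qed

context chs begin

lemma lsum_scale: "lsum sc n (\<lambda>j. t * a j) u = sc t (lsum sc n a u)"
  unfolding lsum_def by (simp add: sc_sum_right sc_assoc)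

lemma synth_from_unit:
  assumes "\<And>n a. (\<Sum>j<n. (cmod (a j))\<^sup>2) = 1 \<Longrightarrow> lo \<le> nsq ip (lsum sc n a u) \<and> nsq ip (lsum sc n a u) \<le> hi"
  shows "lo * (\<Sum>j<n. (cmod (a j))\<^sup>2) \<le> nsq ip (lsum sc n a u) \<and> nsq ip (lsum sc n a u) \<le> hi * (\<Sum>j<n. (cmod (a j))\<^sup>2)"
proof (cases "(\<Sum>j<n. (cmod (a j))\<^sup>2) = 0")
  case True
  hence "a j = 0" if "j < n" for j using that by (subst (asm) sum_nonneg_eq_0_iff) auto
  hence "lsum sc n a u = 0" unfolding lsum_def by simp
  thus ?thesis using True by simp
next
  case False
  define S where "S = (\<Sum>j<n. (cmod (a j))\<^sup>2)"
  have p: "S > 0" using False sum_nonneg[of "{..<n}" "\<lambda>j. (cmod (a j))\<^sup>2"] unfolding S_def by simp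
  define t where "t = 1 / sqrt S"
  have t2: "t\<^sup>2 = 1 / S" unfolding t_def using p by (simp add: power_divide)
  have "(\<Sum>j<n. (cmod (complex_of_real t * a j))\<^sup>2) = t\<^sup>2 * S"
    unfolding S_def by (simp add: norm_mult power_mult_distrib sum_distrib_left)
  hence "(\<Sum>j<n. (cmod (complex_of_real t * a j))\<^sup>2) = 1" using p t2 by simp
  from assms[OF this] have "lo \<le> t\<^sup>2 * nsq ip (lsum sc n a u)" "t\<^sup>2 * nsq ip (lsum sc n a u) \<le> hi"
    unfolding lsum_scale nsq_sc by simp_all
  thus ?thesis using p unfolding S_def[symmetric] t2 by (simp add: field_simps)
qed

lemma riesz_intro:
  assumes sums: "\<And>f. (\<lambda>j. (cmod (ip f (u j)))\<^sup>2) sums (S f)"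
    and an: "\<And>f. al * nsq ip f \<le> S f" "\<And>f. S f \<le> be * nsq ip f" and al: "al > 0"
    and syn: "\<And>n a. (\<Sum>j<n. (cmod (a j))\<^sup>2) = 1 \<Longrightarrow> lo \<le> nsq ip (lsum sc n a u) \<and> nsq ip (lsum sc n a u) \<le> hi"
    and lo: "lo > 0"
  shows "riesz_basis sc ip u"
  unfolding riesz_basis_def
proof (intro exI conjI allI)
  define A where "A = min (min al lo) 1"
  define B where "B = max (max be hi) 1"
  show "0 < A" "A \<le> B" unfolding A_def B_def using al lo by auto
  fix f
  show "summable (\<lambda>j. (cmod (ip f (u j)))\<^sup>2)" using sums[of f] by (rule sums_summable)
  have s: "(\<Sum>j. (cmod (ip f (u j)))\<^sup>2) = S f" using sums[of f] by (rule sums_unique[symmetric])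
  have nn: "0 \<le> nsq ip f" by (rule nsq_nonneg)
  have "A * nsq ip f \<le> al * nsq ip f" unfolding A_def using nn by (intro mult_right_mono) auto
  thus "A * (hnorm ip f)\<^sup>2 \<le> (\<Sum>j. (cmod (ip f (u j)))\<^sup>2)" unfolding s hnorm_sq using an(1)[of f] by linarith
  have "be * nsq ip f \<le> B * nsq ip f" unfolding B_def using nn by (intro mult_right_mono) auto
  thus "(\<Sum>j. (cmod (ip f (u j)))\<^sup>2) \<le> B * (hnorm ip f)\<^sup>2" unfolding s hnorm_sq using an(2)[of f] by linarith
next
  define A where "A = min (min al lo) 1"
  define B where "B = max (max be hi) 1"
  fix n a
  have sy: "lo * (\<Sum>j<n. (cmod (a j))\<^sup>2) \<le> nsq ip (lsum sc n a u) \<and> nsq ip (lsum sc n a u) \<le> hi * (\<Sum>j<n. (cmod (a j))\<^sup>2)"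
    by (rule synth_from_unit[OF syn])
  have nn: "0 \<le> (\<Sum>j<n. (cmod (a j))\<^sup>2)" by (intro sum_nonneg) auto
  have "A * (\<Sum>j<n. (cmod (a j))\<^sup>2) \<le> lo * (\<Sum>j<n. (cmod (a j))\<^sup>2)"
    unfolding A_def using nn by (intro mult_right_mono) auto
  thus "A * (\<Sum>j<n. (cmod (a j))\<^sup>2) \<le> (hnorm ip (lsum sc n a u))\<^sup>2" unfolding hnorm_sq using sy by linarith
  have "hi * (\<Sum>j<n. (cmod (a j))\<^sup>2) \<le> B * (\<Sum>j<n. (cmod (a j))\<^sup>2)"
    unfolding B_def using nn by (intro mult_right_mono) auto
  thus "(hnorm ip (lsum sc n a u))\<^sup>2 \<le> B * (\<Sum>j<n. (cmod (a j))\<^sup>2)" unfolding hnorm_sq using sy by linarith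
qed

end


context setting begin

lemma sums_tail:
  assumes "\<And>j. j \<ge> N \<Longrightarrow> BBx j = v j"
  shows "(\<lambda>j. (cmod (ip f (BBx j)))\<^sup>2) sums ((\<Sum>j<N. (cmod (ip f (BBx j)))\<^sup>2) + nsq ip (f - P1 N f))"
proof -
  have e: "(cmod (ip f (BBx j)))\<^sup>2 = (cmod (ip (f - P1 N f) (v j)))\<^sup>2 + (if j \<in> {..<N} then (cmod (ip f (BBx j)))\<^sup>2 else 0)" for j
    using assms[of j] by (auto simp: ip_res_v)
  have "(\<lambda>j. (cmod (ip (f - P1 N f) (v j)))\<^sup>2 + (if j \<in> {..<N} then (cmod (ip f (BBx j)))\<^sup>2 else 0))
     sums (nsq ip (f - P1 N f) + (\<Sum>j<N. (cmod (ip f (BBx j)))\<^sup>2))"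
    by (intro sums_add parseval sums_If_finite_set) simp
  thus ?thesis unfolding e[symmetric] by (simp add: add.commute)
qed

lemma v_in_span: "k < N \<Longrightarrow> v k \<in> fspan sc N v"
proof -
  assume k: "k < N"
  have "lsum sc N (\<lambda>j. if j = k then 1 else 0) v = v k"
    unfolding lsum_def sc_if01 using k by (simp add: sum.delta)
  thus ?thesis unfolding fspan_def by (metis (mono_tags, lifting) mem_Collect_eq)
qed

lemma basis_span: "fspan sc N (\<lambda>j. P1 N (w j)) = fspan sc N v"
  using basis unfolding is_basis_of_def by blast
lemma basis_indep: "lsum sc N c (\<lambda>j. P1 N (w j)) = 0 \<Longrightarrow> j < N \<Longrightarrow> c j = 0"
  using basis unfolding is_basis_of_def by blast

lemma exists_E: "\<exists>e. \<forall>k<N. v k = (\<Sum>j<N. sc (e k j) (P1 N (w j)))"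
proof -
  have "\<forall>k. \<exists>c. k < N \<longrightarrow> v k = (\<Sum>j<N. sc (c j) (P1 N (w j)))"
  proof
    fix k show "\<exists>c. k < N \<longrightarrow> v k = (\<Sum>j<N. sc (c j) (P1 N (w j)))"
    proof (cases "k < N")
      case True
      hence "v k \<in> fspan sc N (\<lambda>j. P1 N (w j))" using v_in_span basis_span by simp
      thus ?thesis unfolding fspan_def lsum_def by blast
    qed simp
  qed
  thus ?thesis by metis
qed

definition Ecoef where "Ecoef = (SOME e. \<forall>k<N. v k = (\<Sum>j<N. sc (e k j) (P1 N (w j))))"
lemma Ecoef: "k < N \<Longrightarrow> v k = (\<Sum>j<N. sc (Ecoef k j) (P1 N (w j)))"
  using someI_ex[OF exists_E] unfolding Ecoef_def by blast
definition EE where "EE = (\<Sum>k<N. \<Sum>j<N. (cmod (Ecoef k j))\<^sup>2)"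
lemma EE_nonneg: "EE \<ge> 0" unfolding EE_def by (intro sum_nonneg) auto

lemma nsq_P1_le_E: "nsq ip (P1 N f) \<le> EE * (\<Sum>j<N. (cmod (ip f (P1 N (w j))))\<^sup>2)"
proof -
  define T where "T = (\<Sum>j<N. (cmod (ip f (P1 N (w j))))\<^sup>2)"
  have "(cmod (ip f (v k)))\<^sup>2 \<le> (\<Sum>j<N. (cmod (Ecoef k j))\<^sup>2) * T" if k: "k < N" for k
  proof -
    have "ip f (v k) = (\<Sum>j<N. cnj (Ecoef k j) * ip f (P1 N (w j)))"
      by (subst Ecoef[OF k]) (simp add: ip_sum_right ip_sc_right)
    hence "(cmod (ip f (v k)))\<^sup>2 \<le> (\<Sum>j<N. (cmod (cnj (Ecoef k j)))\<^sup>2) * T"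
      unfolding T_def by (simp only: cmod_sum_sq_le)
    thus ?thesis by simp
  qed
  hence "(\<Sum>k<N. (cmod (ip f (v k)))\<^sup>2) \<le> (\<Sum>k<N. (\<Sum>j<N. (cmod (Ecoef k j))\<^sup>2) * T)"
    by (intro sum_mono) auto
  thus ?thesis unfolding nsq_P1 EE_def T_def sum_distrib_right .
qed

lemma nsq_u_le: "nsq ip (P1 N (w j)) \<le> 1"
  using nsq_P1_le[of N "w j"] unit[of j] by simp
lemma nsq_r_le: "nsq ip (w j - P1 N (w j)) \<le> 1"
  using nsq_res_le[of "w j" N] unit[of j] by simp

lemma ip_sq_le: "nsq ip y \<le> 1 \<Longrightarrow> (cmod (ip f y))\<^sup>2 \<le> nsq ip f"
  using cauchy_schwarz[of f y] nsq_nonneg[of f] by (meson mult_left_le order_trans)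

lemma BBt_sums: "(\<lambda>j. (cmod (ip f (BBt j)))\<^sup>2) sums ((\<Sum>j<N. (cmod (ip f (P1 N (w j))))\<^sup>2) + nsq ip (f - P1 N f))"
  using sums_tail[of BBt f] unfolding BBt_def by simp
lemma BB_sums: "(\<lambda>j. (cmod (ip f (BB j)))\<^sup>2) sums ((\<Sum>j<N. (cmod (ip f (w j)))\<^sup>2) + nsq ip (f - P1 N f))"
  using sums_tail[of BB f] unfolding BB_def by simp

lemma BBt_an_upper: "(\<Sum>j<N. (cmod (ip f (P1 N (w j))))\<^sup>2) + nsq ip (f - P1 N f) \<le> (real N + 1) * nsq ip f"
proof -
  have "(\<Sum>j<N. (cmod (ip f (P1 N (w j))))\<^sup>2) \<le> (\<Sum>j<N. nsq ip f)"
    by (intro sum_mono ip_sq_le nsq_u_le)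
  thus ?thesis using nsq_res_le[of f N] by (simp add: algebra_simps)
qed
lemma BB_an_upper: "(\<Sum>j<N. (cmod (ip f (w j)))\<^sup>2) + nsq ip (f - P1 N f) \<le> (real N + 1) * nsq ip f"
proof -
  have "(\<Sum>j<N. (cmod (ip f (w j)))\<^sup>2) \<le> (\<Sum>j<N. nsq ip f)"
    by (intro sum_mono ip_sq_le) (simp add: unit)
  thus ?thesis using nsq_res_le[of f N] by (simp add: algebra_simps)
qed

lemma BBt_an_lower: "(1 / (EE + 1)) * nsq ip f \<le> (\<Sum>j<N. (cmod (ip f (P1 N (w j))))\<^sup>2) + nsq ip (f - P1 N f)"
proof -
  define T where "T = (\<Sum>j<N. (cmod (ip f (P1 N (w j))))\<^sup>2)"
  have T: "T \<ge> 0" unfolding T_def by (intro sum_nonneg) auto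
  have "nsq ip f \<le> EE * T + nsq ip (f - P1 N f)"
    using nsq_split[of f N] nsq_P1_le_E[of f] unfolding T_def by linarith
  also have "\<dots> \<le> (EE + 1) * (T + nsq ip (f - P1 N f))"
    using T EE_nonneg nsq_nonneg[of "f - P1 N f"] by (simp add: algebra_simps)
  finally show ?thesis using EE_nonneg unfolding T_def by (simp add: field_simps)
qed

lemma sq_sum_le: "(cmod (a::complex))\<^sup>2 \<le> 2 * (cmod (a + b))\<^sup>2 + 2 * (cmod b)\<^sup>2"
proof -
  have "cmod a \<le> cmod (a + b) + cmod b" using norm_triangle_ineq4[of "a + b" b] by simp
  hence "(cmod a)\<^sup>2 \<le> (cmod (a + b) + cmod b)\<^sup>2" by (rule power_mono) simp
  also have "\<dots> \<le> 2 * (cmod (a + b))\<^sup>2 + 2 * (cmod b)\<^sup>2"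
    using sum_squares_ge_zero[of "cmod (a+b) - cmod b" 0] by (simp add: power2_eq_square algebra_simps)
  finally show ?thesis .
qed

definition KB where "KB = 2 * (EE + 1) * (real N + 1) + 1"

lemma BB_an_lower: "(1 / KB) * nsq ip f \<le> (\<Sum>j<N. (cmod (ip f (w j)))\<^sup>2) + nsq ip (f - P1 N f)"
proof -
  define h where "h = f - P1 N f"
  define T where "T = (\<Sum>j<N. (cmod (ip f (P1 N (w j))))\<^sup>2)"
  define Sw where "Sw = (\<Sum>j<N. (cmod (ip f (w j)))\<^sup>2)"
  have Sw: "Sw \<ge> 0" unfolding Sw_def by (intro sum_nonneg) auto
  have hn: "nsq ip h \<ge> 0" by (rule nsq_nonneg)
  have each: "(cmod (ip f (P1 N (w j))))\<^sup>2 \<le> 2 * (cmod (ip f (w j)))\<^sup>2 + 2 * nsq ip h" for j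
  proof -
    have "ip f (w j) = ip f (P1 N (w j)) + ip f (w j - P1 N (w j))"
      by (simp add: ip_diff_right)
    moreover have "ip f (w j - P1 N (w j)) = ip h (w j - P1 N (w j))"
      unfolding h_def by (simp add: ip_res_res)
    moreover have "(cmod (ip h (w j - P1 N (w j))))\<^sup>2 \<le> nsq ip h"
      by (rule ip_sq_le[OF nsq_r_le])
    ultimately show ?thesis
      using sq_sum_le[of "ip f (P1 N (w j))" "ip f (w j - P1 N (w j))"] by simp
  qed
  have "T \<le> (\<Sum>j<N. 2 * (cmod (ip f (w j)))\<^sup>2 + 2 * nsq ip h)"
    unfolding T_def by (intro sum_mono each)
  hence T: "T \<le> 2 * Sw + 2 * real N * nsq ip h"
    unfolding Sw_def by (simp add: sum.distrib sum_distrib_left)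
  have "nsq ip f \<le> EE * T + nsq ip h"
    using nsq_split[of f N] nsq_P1_le_E[of f] unfolding T_def h_def by linarith
  also have "\<dots> \<le> (EE + 1) * T + nsq ip h"
    using T_def by (simp add: algebra_simps sum_nonneg)
  also have "\<dots> \<le> (EE + 1) * (2 * Sw + 2 * real N * nsq ip h) + nsq ip h"
    using T EE_nonneg by (intro add_right_mono mult_left_mono) auto
  also have "\<dots> \<le> KB * (Sw + nsq ip h)"
    unfolding KB_def using Sw hn EE_nonneg by (simp add: algebra_simps mult_nonneg_nonneg)
  finally have "nsq ip f \<le> KB * (Sw + nsq ip h)" .
  moreover have "KB > 0" unfolding KB_def using EE_nonneg by (simp add: add_pos_nonneg)
  ultimately show ?thesis unfolding Sw_def h_def by (simp add: field_simps)
qed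

end


context setting begin

lemma herm_U1: "herm N U1"
  unfolding herm_def U1_def gram_def by (intro allI impI) (rule ip_conj')

lemma q1_repr: "qform N U1 d = nsq ip (\<Sum>i<N. sc (cnj (d i)) (P1 N (w i)))"
  unfolding U1_def by (rule qform_gram)

lemma q1_nonneg: "qform N U1 d \<ge> 0" unfolding q1_repr by (rule nsq_nonneg)
lemma q2_nonneg: "qform N U2 d \<ge> 0" unfolding U2_def by (rule qform_gram_nonneg)

lemma q1_pos: "i < N \<Longrightarrow> d i \<noteq> 0 \<Longrightarrow> qform N U1 d > 0"
proof (rule ccontr)
  assume i: "i < N" "d i \<noteq> 0" and "\<not> qform N U1 d > 0"
  hence "qform N U1 d = 0" using q1_nonneg[of d] by simp
  hence "(\<Sum>i<N. sc (cnj (d i)) (P1 N (w i))) = 0" unfolding q1_repr nsq_zero_iff .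
  hence "lsum sc N (\<lambda>i. cnj (d i)) (\<lambda>j. P1 N (w j)) = 0" unfolding lsum_def .
  hence "cnj (d i) = 0" using basis_indep i(1) by blast
  thus False using i(2) by simp
qed

lemma q1_zero_iff: "qform N U1 d = 0 \<Longrightarrow> i < N \<Longrightarrow> d i = 0"
  using q1_pos by fastforce

lemma ex_max_q1: "\<exists>d. vnorm2 N d = 1 \<and> (\<forall>c. vnorm2 N c = 1 \<longrightarrow> qform N U1 c \<le> qform N U1 d)"
  by (rule attains_max_sphere[OF cont_qform _ Npos]) simp
lemma ex_min_q1: "\<exists>d. vnorm2 N d = 1 \<and> (\<forall>c. vnorm2 N c = 1 \<longrightarrow> qform N U1 d \<le> qform N U1 c)"
  by (rule attains_min_sphere[OF cont_qform _ Npos]) simp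

definition dmax where "dmax = (SOME d. vnorm2 N d = 1 \<and> (\<forall>c. vnorm2 N c = 1 \<longrightarrow> qform N U1 c \<le> qform N U1 d))"
definition dmin where "dmin = (SOME d. vnorm2 N d = 1 \<and> (\<forall>c. vnorm2 N c = 1 \<longrightarrow> qform N U1 d \<le> qform N U1 c))"
lemma dmax: "vnorm2 N dmax = 1" "vnorm2 N c = 1 \<Longrightarrow> qform N U1 c \<le> qform N U1 dmax"
  using someI_ex[OF ex_max_q1] unfolding dmax_def by blast+
lemma dmin: "vnorm2 N dmin = 1" "vnorm2 N c = 1 \<Longrightarrow> qform N U1 dmin \<le> qform N U1 c"
  using someI_ex[OF ex_min_q1] unfolding dmin_def by blast+

definition LamMax where "LamMax = qform N U1 dmax"
definition LamMin where "LamMin = qform N U1 dmin"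

lemma q1_le_max: "qform N U1 c \<le> LamMax * vnorm2 N c"
  unfolding LamMax_def
  by (rule sphere_bound[where f="qform N U1"]) (auto simp: dmax qform_scale intro: qform_zero vnorm2_zero)

lemma q1_ge_min: "LamMin * vnorm2 N c \<le> qform N U1 c"
proof -
  have "(\<lambda>c. - qform N U1 c) c \<le> (- LamMin) * vnorm2 N c"
    unfolding LamMin_def
    by (rule sphere_bound[where f="\<lambda>c. - qform N U1 c"]) (auto simp: dmin qform_scale intro: qform_zero vnorm2_zero)
  thus ?thesis by simp
qed

lemma vnorm2_pos: "i < N \<Longrightarrow> c i \<noteq> 0 \<Longrightarrow> vnorm2 N c > 0"
proof -
  assume i: "i < N" "c i \<noteq> 0"
  have "0 < (cmod (c i))\<^sup>2" using i by simp
  also have "\<dots> \<le> vnorm2 N c" unfolding vnorm2_def using i by (intro member_le_sum) auto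
  finally show ?thesis .
qed

lemma vnorm2_one_ex: "vnorm2 N c = 1 \<Longrightarrow> \<exists>i<N. c i \<noteq> 0"
proof (rule ccontr)
  assume a: "vnorm2 N c = 1" "\<not> (\<exists>i<N. c i \<noteq> 0)"
  hence "vnorm2 N c = 0" unfolding vnorm2_def by simp
  thus False using a by simp
qed

lemma eig_max: "mat_eigenvalue N U1 (complex_of_real LamMax)"
  unfolding mat_eigenvalue_def
proof (rule exI[of _ dmax], rule conjI)
  show "\<exists>i<N. dmax i \<noteq> 0" using vnorm2_one_ex dmax(1) by blast
  show "\<forall>i<N. (\<Sum>j<N. U1 i j * dmax j) = complex_of_real LamMax * dmax i"
    using max_eigvec[OF herm_U1 q1_le_max] dmax(1) unfolding LamMax_def by simp
qed
lemma eig_min: "mat_eigenvalue N U1 (complex_of_real LamMin)"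
  unfolding mat_eigenvalue_def
proof (rule exI[of _ dmin], rule conjI)
  show "\<exists>i<N. dmin i \<noteq> 0" using vnorm2_one_ex dmin(1) by blast
  show "\<forall>i<N. (\<Sum>j<N. U1 i j * dmin j) = complex_of_real LamMin * dmin i"
    using min_eigvec[OF herm_U1 q1_ge_min] dmin(1) unfolding LamMin_def by simp
qed

lemma eig_bounds: "mat_eigenvalue N U1 (complex_of_real r) \<Longrightarrow> LamMin \<le> r \<and> r \<le> LamMax"
proof -
  assume "mat_eigenvalue N U1 (complex_of_real r)"
  then obtain c where c: "\<exists>i<N. c i \<noteq> 0" "\<forall>i<N. (\<Sum>j<N. U1 i j * c j) = complex_of_real r * c i"
    unfolding mat_eigenvalue_def by blast
  have q: "qform N U1 c = r * vnorm2 N c" using c(2) by (intro eig_qform) auto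
  have p: "vnorm2 N c > 0" using c(1) vnorm2_pos by blast
  have "r * vnorm2 N c \<le> LamMax * vnorm2 N c" using q1_le_max[of c] q by simp
  moreover have "LamMin * vnorm2 N c \<le> r * vnorm2 N c" using q1_ge_min[of c] q by simp
  ultimately show ?thesis using p by simp
qed

lemma max_eig_U1: "finite {r. mat_eigenvalue N U1 (complex_of_real r)} \<Longrightarrow> max_eig N U1 = LamMax"
  unfolding max_eig_def by (rule Max_eqI) (auto simp: eig_max dest: eig_bounds)
lemma min_eig_U1: "finite {r. mat_eigenvalue N U1 (complex_of_real r)} \<Longrightarrow> min_eig N U1 = LamMin"
  unfolding min_eig_def by (rule Min_eqI) (auto simp: eig_min dest: eig_bounds)

definition ee where "ee j = (\<lambda>i. if i = j then (1::complex) else 0)"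

lemma q1_ee: assumes j: "j < N" shows "qform N U1 (ee j) = nsq ip (P1 N (w j))"
proof -
  have e: "(\<lambda>i. sc (cnj (ee j i)) (P1 N (w i))) = (\<lambda>i. if i = j then P1 N (w j) else 0)"
    by (auto simp: ee_def)
  show ?thesis unfolding q1_repr e using j by (simp add: sum.delta)
qed
lemma vnorm2_ee: "j < N \<Longrightarrow> vnorm2 N (ee j) = 1"
proof -
  assume j: "j < N"
  have "vnorm2 N (ee j) = (\<Sum>i<N. if i = j then 1 else 0)"
    unfolding vnorm2_def ee_def by (intro sum.cong) auto
  thus ?thesis using j by simp
qed

lemma LamMin_le_u: "j < N \<Longrightarrow> LamMin \<le> nsq ip (P1 N (w j))"
  using q1_ge_min[of "ee j"] q1_ee vnorm2_ee by simp
lemma LamMin_le1: "LamMin \<le> 1"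
  using LamMin_le_u[of 0] Npos nsq_u_le[of 0] by simp
lemma LamMin_pos: "LamMin > 0"
  using vnorm2_one_ex[OF dmin(1)] q1_pos unfolding LamMin_def by blast

end


context setting begin

lemma rv_mem: "(\<Sum>j<n. (cmod (a j))\<^sup>2) = 1 \<Longrightarrow> nsq ip (lsum sc n a u) \<in> riesz_values sc ip u"
  unfolding riesz_values_def hnorm_sq by blast
lemma rv_elim: "x \<in> riesz_values sc ip u \<Longrightarrow> \<exists>n a. (\<Sum>j<n. (cmod (a j))\<^sup>2) = 1 \<and> x = nsq ip (lsum sc n a u)"
  unfolding riesz_values_def hnorm_sq by blast

lemma BBt_value:
  assumes "(\<Sum>j<n. (cmod (a j))\<^sup>2) = 1"
  shows "\<exists>d. vnorm2 N d \<le> 1 \<and> nsq ip (lsum sc n a BBt) = qform N U1 d + (1 - vnorm2 N d)"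
proof -
  define d where "d = (\<lambda>j. cnj (if j < n then a j else 0))"
  have b: "nsq ip (beta n a) = 1 - vnorm2 N d" unfolding nsq_beta assms d_def ..
  show ?thesis
  proof (intro exI conjI)
    show "vnorm2 N d \<le> 1" using b nsq_nonneg[of "beta n a"] by simp
    show "nsq ip (lsum sc n a BBt) = qform N U1 d + (1 - vnorm2 N d)"
      unfolding decomp_BBt b d_def ..
  qed
qed

lemma BBt_bounds:
  assumes "(\<Sum>j<n. (cmod (a j))\<^sup>2) = 1"
  shows "LamMin \<le> nsq ip (lsum sc n a BBt) \<and> nsq ip (lsum sc n a BBt) \<le> max LamMax 1"
proof -
  obtain d where d: "vnorm2 N d \<le> 1" "nsq ip (lsum sc n a BBt) = qform N U1 d + (1 - vnorm2 N d)"
    using BBt_value[OF assms] by blast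
  define t where "t = vnorm2 N d"
  have t: "0 \<le> t" "t \<le> 1" using d(1) vnorm2_nonneg unfolding t_def by auto
  have q: "LamMin * t \<le> qform N U1 d" "qform N U1 d \<le> LamMax * t"
    using q1_ge_min q1_le_max unfolding t_def by auto
  have "LamMin * (1 - t) \<le> 1 - t" using LamMin_le1 t by (intro mult_left_le_one_le) (auto simp: LamMin_pos less_imp_le)
  moreover have "LamMax * t \<le> max LamMax 1 * t" using t by (intro mult_right_mono) auto
  moreover have "1 - t \<le> max LamMax 1 * (1 - t)" using mult_right_mono[of 1 "max LamMax 1" "1 - t"] t by simp
  ultimately show ?thesis unfolding d(2) t_def[symmetric] using q by (simp add: algebra_simps)
qed

lemma LamMax_in: "LamMax \<in> riesz_values sc ip BBt"
proof -
  define a where "a = (\<lambda>j. cnj (dmax j))"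
  have s: "(\<Sum>j<N. (cmod (a j))\<^sup>2) = 1" using dmax(1) unfolding a_def vnorm2_def by simp
  have "nsq ip (lsum sc N a BBt) = qform N U1 (\<lambda>j. cnj (if j < N then a j else 0)) + nsq ip (beta N a)"
    by (rule decomp_BBt)
  also have "qform N U1 (\<lambda>j. cnj (if j < N then a j else 0)) = LamMax"
    unfolding LamMax_def a_def by (rule qform_cong) simp
  also have "nsq ip (beta N a) = 0" unfolding nsq_beta s
    using dmax(1) vnorm2_cong[of N "\<lambda>j. cnj (if j < N then a j else 0)" dmax] unfolding a_def by simp
  finally show ?thesis using rv_mem[OF s, of BBt] by simp
qed

lemma LamMin_in: "LamMin \<in> riesz_values sc ip BBt"
proof -
  define a where "a = (\<lambda>j. cnj (dmin j))"
  have s: "(\<Sum>j<N. (cmod (a j))\<^sup>2) = 1" using dmin(1) unfolding a_def vnorm2_def by simp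
  have "nsq ip (lsum sc N a BBt) = qform N U1 (\<lambda>j. cnj (if j < N then a j else 0)) + nsq ip (beta N a)"
    by (rule decomp_BBt)
  also have "qform N U1 (\<lambda>j. cnj (if j < N then a j else 0)) = LamMin"
    unfolding LamMin_def a_def by (rule qform_cong) simp
  also have "nsq ip (beta N a) = 0" unfolding nsq_beta s
    using dmin(1) vnorm2_cong[of N "\<lambda>j. cnj (if j < N then a j else 0)" dmin] unfolding a_def by simp
  finally show ?thesis using rv_mem[OF s, of BBt] by simp
qed

definition eN where "eN = (\<lambda>j. if j = N then (1::complex) else 0)"

lemma eN_sum: "(\<Sum>j<Suc N. (cmod (eN j))\<^sup>2) = 1"
proof -
  have "(\<Sum>j<Suc N. (cmod (eN j))\<^sup>2) = (\<Sum>j<Suc N. if j = N then 1 else 0)"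
    unfolding eN_def by (intro sum.cong) auto
  thus ?thesis by simp
qed

lemma zero_restr: "i < N \<Longrightarrow> cnj (if i < Suc N then eN i else 0) = 0"
  unfolding eN_def by simp

lemma one_in_BBt: "1 \<in> riesz_values sc ip BBt"
proof -
  have "nsq ip (lsum sc (Suc N) eN BBt) = qform N U1 (\<lambda>j. cnj (if j < Suc N then eN j else 0)) + nsq ip (beta (Suc N) eN)"
    by (rule decomp_BBt)
  also have "qform N U1 (\<lambda>j. cnj (if j < Suc N then eN j else 0)) = 0"
    by (rule qform_zero) (rule zero_restr)
  also have "vnorm2 N (\<lambda>j. cnj (if j < Suc N then eN j else 0)) = vnorm2 N (\<lambda>j. 0)"
    by (rule vnorm2_cong) (rule zero_restr)
  hence "nsq ip (beta (Suc N) eN) = 1" unfolding nsq_beta eN_sum by (simp add: vnorm2_def)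
  finally show ?thesis using rv_mem[OF eN_sum, of BBt] by simp
qed

lemma opt_upper_BBt: "opt_upper sc ip BBt = max LamMax 1"
  unfolding opt_upper_def
proof (rule cSup_eq_maximum)
  show "max LamMax 1 \<in> riesz_values sc ip BBt" using LamMax_in one_in_BBt by (cases "LamMax \<le> 1") auto
  fix x assume "x \<in> riesz_values sc ip BBt"
  thus "x \<le> max LamMax 1" using BBt_bounds rv_elim by blast
qed

lemma opt_lower_BBt: "opt_lower sc ip BBt = LamMin"
  unfolding opt_lower_def
proof (rule cInf_eq_minimum)
  show "LamMin \<in> riesz_values sc ip BBt" by (rule LamMin_in)
  fix x assume "x \<in> riesz_values sc ip BBt"
  thus "LamMin \<le> x" using BBt_bounds rv_elim by blast
qed

lemma riesz_BBt: "riesz_basis sc ip BBt"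
proof (rule riesz_intro[OF BBt_sums])
  show "1 / (EE + 1) * nsq ip f \<le> (\<Sum>j<N. (cmod (ip f (P1 N (w j))))\<^sup>2) + nsq ip (f - P1 N f)" for f
    by (rule BBt_an_lower)
  show "(\<Sum>j<N. (cmod (ip f (P1 N (w j))))\<^sup>2) + nsq ip (f - P1 N f) \<le> (real N + 1) * nsq ip f" for f
    by (rule BBt_an_upper)
  show "0 < 1 / (EE + 1)" using EE_nonneg by simp
  show "LamMin \<le> nsq ip (lsum sc n a BBt) \<and> nsq ip (lsum sc n a BBt) \<le> max LamMax 1"
    if "(\<Sum>j<n. (cmod (a j))\<^sup>2) = 1" for n a using BBt_bounds[OF that] .
  show "0 < LamMin" by (rule LamMin_pos)
qed

end


context setting begin

definition FF where "FF = (\<lambda>c. qform N U1 c + (sqrt (1 - vnorm2 N c) + sqrt (qform N U2 c))\<^sup>2)"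
definition GG where "GG = (\<lambda>c. qform N U1 c + (sqrt (1 - vnorm2 N c) - sqrt (qform N U2 c))\<^sup>2)"

lemma BB_bounds:
  assumes "(\<Sum>j<n. (cmod (a j))\<^sup>2) = 1"
  shows "\<exists>d. vnorm2 N d \<le> 1 \<and> GG d \<le> nsq ip (lsum sc n a BB) \<and> nsq ip (lsum sc n a BB) \<le> FF d"
proof -
  define c where "c = (\<lambda>j. if j < n then a j else 0)"
  define d where "d = (\<lambda>j. cnj (c j))"
  define y where "y = X1 c - P1 N (X1 c)"
  have b: "nsq ip (beta n a) = 1 - vnorm2 N d" unfolding nsq_beta assms d_def c_def ..
  have yq: "nsq ip y = qform N U2 d" unfolding y_def d_def by (rule nsq_res_X1)
  have val: "nsq ip (lsum sc n a BB) = qform N U1 d + nsq ip (y + beta n a)"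
    unfolding d_def y_def c_def by (rule decomp_BB)
  show ?thesis
  proof (intro exI conjI)
    show "vnorm2 N d \<le> 1" using b nsq_nonneg[of "beta n a"] by simp
    show "GG d \<le> nsq ip (lsum sc n a BB)"
      unfolding val GG_def using nsq_add_bounds(1)[of y "beta n a"] unfolding b yq
      by (simp add: power2_commute)
    show "nsq ip (lsum sc n a BB) \<le> FF d"
      unfolding val FF_def using nsq_add_bounds(2)[of y "beta n a"] unfolding b yq
      by (simp add: add.commute)
  qed
qed

lemma cont_FF: "continuous_on UNIV FF" unfolding FF_def by (intro continuous_intros)
lemma cont_GG: "continuous_on UNIV GG" unfolding GG_def by (intro continuous_intros)

lemma ex_max_FF: "\<exists>d. vnorm2 N d \<le> 1 \<and> (\<forall>c. vnorm2 N c \<le> 1 \<longrightarrow> FF c \<le> FF d)"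
  by (rule attains_max_ball[OF cont_FF]) (simp add: FF_def)
lemma ex_min_GG: "\<exists>d. vnorm2 N d \<le> 1 \<and> (\<forall>c. vnorm2 N c \<le> 1 \<longrightarrow> GG d \<le> GG c)"
  by (rule attains_min_ball[OF cont_GG]) (simp add: GG_def)

definition dF where "dF = (SOME d. vnorm2 N d \<le> 1 \<and> (\<forall>c. vnorm2 N c \<le> 1 \<longrightarrow> FF c \<le> FF d))"
definition dG where "dG = (SOME d. vnorm2 N d \<le> 1 \<and> (\<forall>c. vnorm2 N c \<le> 1 \<longrightarrow> GG d \<le> GG c))"
lemma dF: "vnorm2 N dF \<le> 1" "vnorm2 N c \<le> 1 \<Longrightarrow> FF c \<le> FF dF"
  using someI_ex[OF ex_max_FF] unfolding dF_def by blast+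
lemma dG: "vnorm2 N dG \<le> 1" "vnorm2 N c \<le> 1 \<Longrightarrow> GG dG \<le> GG c"
  using someI_ex[OF ex_min_GG] unfolding dG_def by blast+

lemma GG_pos: "vnorm2 N c \<le> 1 \<Longrightarrow> GG c > 0"
proof (cases "\<exists>i<N. c i \<noteq> 0")
  case True
  then obtain i where "i < N" "c i \<noteq> 0" by blast
  hence "qform N U1 c > 0" by (rule q1_pos)
  thus ?thesis unfolding GG_def by (simp add: add_pos_nonneg)
next
  case False
  hence z: "\<And>i. i < N \<Longrightarrow> c i = 0" by blast
  have "qform N U1 c = 0" "qform N U2 c = 0" using z by (auto intro: qform_zero)
  moreover have "vnorm2 N c = 0" using z unfolding vnorm2_def by simp
  ultimately show ?thesis unfolding GG_def by simp
qed

lemma BB_sandwich: "(\<Sum>j<n. (cmod (a j))\<^sup>2) = 1 \<Longrightarrow> GG dG \<le> nsq ip (lsum sc n a BB) \<and> nsq ip (lsum sc n a BB) \<le> FF dF"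
  using BB_bounds dF dG by (meson order_trans)

lemma riesz_BB: "riesz_basis sc ip BB"
proof (rule riesz_intro[OF BB_sums])
  show "1 / KB * nsq ip f \<le> (\<Sum>j<N. (cmod (ip f (w j)))\<^sup>2) + nsq ip (f - P1 N f)" for f
    by (rule BB_an_lower)
  show "(\<Sum>j<N. (cmod (ip f (w j)))\<^sup>2) + nsq ip (f - P1 N f) \<le> (real N + 1) * nsq ip f" for f
    by (rule BB_an_upper)
  show "0 < 1 / KB" unfolding KB_def using EE_nonneg by (simp add: add_pos_nonneg)
  show "GG dG \<le> nsq ip (lsum sc n a BB) \<and> nsq ip (lsum sc n a BB) \<le> FF dF"
    if "(\<Sum>j<n. (cmod (a j))\<^sup>2) = 1" for n a using BB_sandwich[OF that] .
  show "0 < GG dG" using GG_pos dG(1) by blast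
qed

end


context setting begin

definition Yd where "Yd d = X1 (\<lambda>j. cnj (d j)) - P1 N (X1 (\<lambda>j. cnj (d j)))"

lemma nsq_Yd: "nsq ip (Yd d) = qform N U2 d"
  unfolding Yd_def nsq_res_X1 by simp

lemma value_gen:
  assumes n: "n \<ge> N" and a: "\<And>j. j < N \<Longrightarrow> a j = cnj (d j)"
  shows "nsq ip (lsum sc n a BB) = qform N U1 d + nsq ip (Yd d + beta n a)"
    "(\<Sum>j<n. (cmod (a j))\<^sup>2) = vnorm2 N d + nsq ip (beta n a)"
proof -
  define c where "c = (\<lambda>j. if j < n then a j else 0)"
  have cj: "c j = cnj (d j)" if "j < N" for j using that n a unfolding c_def by simp
  have X: "X1 c = X1 (\<lambda>j. cnj (d j))" unfolding X1_def by (intro sum.cong) (auto simp: cj)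
  have q: "qform N U1 (\<lambda>j. cnj (if j < n then a j else 0)) = qform N U1 d"
    by (rule qform_cong) (use cj in \<open>simp add: c_def\<close>)
  have v: "vnorm2 N (\<lambda>j. cnj (if j < n then a j else 0)) = vnorm2 N d"
    by (rule vnorm2_cong) (use cj in \<open>simp add: c_def\<close>)
  show "nsq ip (lsum sc n a BB) = qform N U1 d + nsq ip (Yd d + beta n a)"
    using decomp_BB[of n a] unfolding q unfolding c_def[symmetric] X Yd_def .
  show "(\<Sum>j<n. (cmod (a j))\<^sup>2) = vnorm2 N d + nsq ip (beta n a)"
    using nsq_beta[of n a] unfolding v by simp
qed

lemma ip_Yd_v: "j < N \<Longrightarrow> ip (Yd d) (v j) = 0"
  unfolding Yd_def by (simp add: ip_res_v)

lemma approx: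
  assumes d: "vnorm2 N d \<le> 1" and e: "\<epsilon> > 0" and sg: "\<sigma>\<^sup>2 = (1::real)"
  shows "\<exists>n a. (\<Sum>j<n. (cmod (a j))\<^sup>2) = 1 \<and>
    \<bar>nsq ip (lsum sc n a BB) - (qform N U1 d + (1 - vnorm2 N d) + qform N U2 d
       + 2 * \<sigma> * sqrt (1 - vnorm2 N d) * sqrt (qform N U2 d))\<bar> \<le> \<epsilon>"
proof -
  define \<rho> where "\<rho> = sqrt (1 - vnorm2 N d)"
  have \<rho>: "0 \<le> \<rho>" "\<rho> \<le> 1" "\<rho>\<^sup>2 = 1 - vnorm2 N d"
    using d vnorm2_nonneg[of N d] unfolding \<rho>_def by auto
  define y where "y = Yd d"
  define Y where "Y = nsq ip y"
  have Yq: "Y = qform N U2 d" unfolding Y_def y_def by (rule nsq_Yd)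
  show ?thesis
  proof (cases "Y = 0")
    case True
    hence y0: "y = 0" unfolding Y_def nsq_zero_iff .
    define a where "a = (\<lambda>j. if j < N then cnj (d j) else if j = N then complex_of_real \<rho> else 0)"
    have aN: "\<And>j. j < N \<Longrightarrow> a j = cnj (d j)" unfolding a_def by simp
    have vg: "nsq ip (lsum sc (Suc N) a BB) = qform N U1 d + nsq ip (Yd d + beta (Suc N) a)"
      "(\<Sum>j<Suc N. (cmod (a j))\<^sup>2) = vnorm2 N d + nsq ip (beta (Suc N) a)"
      using value_gen[of "Suc N" a d] aN by auto
    have nb: "nsq ip (beta (Suc N) a) = \<rho>\<^sup>2"
    proof -
      have "nsq ip (beta (Suc N) a) = (\<Sum>j<Suc N. (cmod (if j < N then 0 else a j))\<^sup>2)"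
        unfolding beta_def by (rule nsq_comb_v) simp
      also have "\<dots> = \<rho>\<^sup>2" using \<rho>(1) by (simp add: a_def)
      finally show ?thesis .
    qed
    show ?thesis
    proof (intro exI conjI)
      show "(\<Sum>j<Suc N. (cmod (a j))\<^sup>2) = 1" using vg(2) nb \<rho>(3) by simp
      have "nsq ip (lsum sc (Suc N) a BB) = qform N U1 d + \<rho>\<^sup>2"
        using vg(1) nb y0 unfolding y_def by simp
      thus "\<bar>nsq ip (lsum sc (Suc N) a BB) - (qform N U1 d + (1 - vnorm2 N d) + qform N U2 d
       + 2 * \<sigma> * sqrt (1 - vnorm2 N d) * sqrt (qform N U2 d))\<bar> \<le> \<epsilon>"
        using True Yq \<rho>(3) e by simp
    qed
  next
    case False
    hence Yp: "Y > 0" using nsq_nonneg[of y] unfolding Y_def by simp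
    define s where "s n = (\<Sum>j<n. (cmod (ip y (v j)))\<^sup>2)" for n
    have "s \<longlonglongrightarrow> Y" using parseval[of y] unfolding sums_def s_def Y_def .
    hence "(\<lambda>n. sqrt (s n)) \<longlonglongrightarrow> sqrt Y" by (rule tendsto_real_sqrt)
    moreover define \<eta> where "\<eta> = min (\<epsilon> / 2) (sqrt Y / 2)"
    have \<eta>: "\<eta> > 0" unfolding \<eta>_def using e Yp by simp
    ultimately obtain n0 where n0: "\<And>n. n \<ge> n0 \<Longrightarrow> \<bar>sqrt (s n) - sqrt Y\<bar> < \<eta>"
      unfolding LIMSEQ_iff by (metis real_norm_def)
    define n where "n = max n0 N"
    have nN: "n \<ge> N" unfolding n_def by simp
    have close: "\<bar>sqrt (s n) - sqrt Y\<bar> < \<eta>" using n0 unfolding n_def by simp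
    hence sp: "sqrt (s n) > 0" unfolding \<eta>_def by linarith
    hence sp': "s n > 0" by simp
    define t where "t = \<sigma> * \<rho> / sqrt (s n)"
    define z where "z = (\<Sum>j<n. sc (ip y (v j)) (v j))"
    define a where "a = (\<lambda>j. if j < N then cnj (d j) else complex_of_real t * ip y (v j))"
    have aN: "\<And>j. j < N \<Longrightarrow> a j = cnj (d j)" unfolding a_def by simp
    have vg: "nsq ip (lsum sc n a BB) = qform N U1 d + nsq ip (y + beta n a)"
      "(\<Sum>j<n. (cmod (a j))\<^sup>2) = vnorm2 N d + nsq ip (beta n a)"
      using value_gen[OF nN aN] unfolding y_def by auto
    have bz: "beta n a = sc (complex_of_real t) z"
    proof -
      have "(if j < N then 0 else a j) = complex_of_real t * ip y (v j)" for j
        using ip_Yd_v[of j d] unfolding a_def y_def by simp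
      hence "beta n a = (\<Sum>j<n. sc (complex_of_real t * ip y (v j)) (v j))" unfolding beta_def by simp
      thus ?thesis unfolding z_def by (simp add: sc_sum_right sc_assoc)
    qed
    have nz: "nsq ip z = s n" unfolding z_def s_def by (simp add: nsq_comb_v)
    have rz: "Re (ip y z) = s n" unfolding z_def s_def by (rule re_ip_f_comb)
    have t2: "t\<^sup>2 * s n = \<rho>\<^sup>2" unfolding t_def using sp sp' sg
      by (simp add: power_divide power_mult_distrib)
    have ts: "t * s n = \<sigma> * \<rho> * sqrt (s n)" unfolding t_def using sp
      by (simp add: field_simps)
    have nb: "nsq ip (beta n a) = \<rho>\<^sup>2" unfolding bz nsq_sc nz using t2 by simp
    have nyb: "nsq ip (y + beta n a) = Y + \<rho>\<^sup>2 + 2 * (\<sigma> * \<rho> * sqrt (s n))"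
    proof -
      have "Re (ip y (beta n a)) = t * s n" unfolding bz ip_sc_right using rz by simp
      thus ?thesis unfolding nsq_add nb Y_def ts by simp
    qed
    have sigma: "\<bar>\<sigma>\<bar> = 1" using sg by (metis abs_of_nonneg abs_power2 one_power2 power2_eq_1_iff abs_1 abs_minus_cancel)
    show ?thesis
    proof (intro exI conjI)
      show "(\<Sum>j<n. (cmod (a j))\<^sup>2) = 1" using vg(2) nb \<rho>(3) by simp
      have diff: "nsq ip (lsum sc n a BB) - (qform N U1 d + (1 - vnorm2 N d) + qform N U2 d
       + 2 * \<sigma> * sqrt (1 - vnorm2 N d) * sqrt (qform N U2 d)) = 2 * \<sigma> * \<rho> * (sqrt (s n) - sqrt Y)"
        unfolding vg(1) nyb using \<rho>(3) Yq unfolding \<rho>_def[symmetric] by (simp add: algebra_simps)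
      have "\<bar>2 * \<sigma> * \<rho> * (sqrt (s n) - sqrt Y)\<bar> = 2 * \<rho> * \<bar>sqrt (s n) - sqrt Y\<bar>"
        using sigma \<rho>(1) by (simp add: abs_mult)
      also have "\<dots> \<le> 2 * 1 * \<eta>" using \<rho> close by (intro mult_mono) auto
      also have "\<dots> \<le> \<epsilon>" unfolding \<eta>_def by simp
      finally show "\<bar>nsq ip (lsum sc n a BB) - (qform N U1 d + (1 - vnorm2 N d) + qform N U2 d
       + 2 * \<sigma> * sqrt (1 - vnorm2 N d) * sqrt (qform N U2 d))\<bar> \<le> \<epsilon>" unfolding diff .
    qed
  qed
qed

end


context setting begin

lemma FF_expand: "vnorm2 N d \<le> 1 \<Longrightarrow> FF d = qform N U1 d + (1 - vnorm2 N d) + qform N U2 d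
       + 2 * 1 * sqrt (1 - vnorm2 N d) * sqrt (qform N U2 d)"
  unfolding FF_def using q2_nonneg[of d] by (simp add: power2_sum)
lemma GG_expand: "vnorm2 N d \<le> 1 \<Longrightarrow> GG d = qform N U1 d + (1 - vnorm2 N d) + qform N U2 d
       + 2 * (-1) * sqrt (1 - vnorm2 N d) * sqrt (qform N U2 d)"
  unfolding GG_def using q2_nonneg[of d] by (simp add: power2_diff)

lemma approx_F: "vnorm2 N d \<le> 1 \<Longrightarrow> \<epsilon> > 0 \<Longrightarrow> \<exists>x\<in>riesz_values sc ip BB. FF d - \<epsilon> \<le> x"
proof -
  assume d: "vnorm2 N d \<le> 1" and e: "\<epsilon> > 0"
  obtain n a where na: "(\<Sum>j<n. (cmod (a j))\<^sup>2) = 1"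
    "\<bar>nsq ip (lsum sc n a BB) - FF d\<bar> \<le> \<epsilon>"
    using approx[OF d e, of 1] unfolding FF_expand[OF d, symmetric] by auto
  show ?thesis using rv_mem[OF na(1), of BB] na(2) by (intro bexI) auto
qed
lemma approx_G: "vnorm2 N d \<le> 1 \<Longrightarrow> \<epsilon> > 0 \<Longrightarrow> \<exists>x\<in>riesz_values sc ip BB. x \<le> GG d + \<epsilon>"
proof -
  assume d: "vnorm2 N d \<le> 1" and e: "\<epsilon> > 0"
  obtain n a where na: "(\<Sum>j<n. (cmod (a j))\<^sup>2) = 1"
    "\<bar>nsq ip (lsum sc n a BB) - GG d\<bar> \<le> \<epsilon>"
    using approx[OF d e, of "-1"] unfolding GG_expand[OF d, symmetric] by auto
  show ?thesis using rv_mem[OF na(1), of BB] na(2) by (intro bexI) auto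
qed

lemma opt_upper_BB: "opt_upper sc ip BB = FF dF"
  unfolding opt_upper_def
proof (rule cSup_eq_non_empty)
  show "riesz_values sc ip BB \<noteq> {}" using approx_F[OF dF(1), of 1] by auto
  show "x \<le> FF dF" if "x \<in> riesz_values sc ip BB" for x
    using that rv_elim BB_sandwich by blast
  show "FF dF \<le> y" if h: "\<And>x. x \<in> riesz_values sc ip BB \<Longrightarrow> x \<le> y" for y
  proof (rule ccontr)
    assume "\<not> FF dF \<le> y"
    hence "(FF dF - y) / 2 > 0" by simp
    from approx_F[OF dF(1) this] obtain x where hx: "x \<in> riesz_values sc ip BB" "FF dF - (FF dF - y) / 2 \<le> x" by blast
    have "x \<le> y" using h hx(1) .
    thus False using hx(2) \<open>\<not> FF dF \<le> y\<close> by (simp add: field_simps)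
  qed
qed

lemma opt_lower_BB: "opt_lower sc ip BB = GG dG"
  unfolding opt_lower_def
proof (rule cInf_eq_non_empty)
  show "riesz_values sc ip BB \<noteq> {}" using approx_G[OF dG(1), of 1] by auto
  show "GG dG \<le> x" if "x \<in> riesz_values sc ip BB" for x
    using that rv_elim BB_sandwich by blast
  show "y \<le> GG dG" if h: "\<And>x. x \<in> riesz_values sc ip BB \<Longrightarrow> y \<le> x" for y
  proof (rule ccontr)
    assume "\<not> y \<le> GG dG"
    hence "(y - GG dG) / 2 > 0" by simp
    from approx_G[OF dG(1) this] obtain x where hx: "x \<in> riesz_values sc ip BB" "x \<le> GG dG + (y - GG dG) / 2" by blast
    have "y \<le> x" using h hx(1) .
    thus False using hx(2) \<open>\<not> y \<le> GG dG\<close> by (simp add: field_simps)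
  qed
qed

lemma q2_ee: assumes j: "j < N" shows "qform N U2 (ee j) = nsq ip (w j - P1 N (w j))"
proof -
  have e: "(\<lambda>i. sc (cnj (ee j i)) (w i - P1 N (w i))) = (\<lambda>i. if i = j then w j - P1 N (w j) else 0)"
    by (auto simp: ee_def)
  show ?thesis unfolding U2_def qform_gram e using j by (simp add: sum.delta)
qed

lemma GG_le_u: assumes j: "j < N" shows "GG dG \<le> nsq ip (P1 N (w j))"
proof -
  define S1 where "S1 = nsq ip (P1 N (w j))"
  define S2 where "S2 = nsq ip (w j - P1 N (w j))"
  have S: "S1 + S2 = 1" "S1 \<ge> 0" "S2 \<ge> 0" using nsq_split[of "w j" N] unit[of j] nsq_nonneg
    unfolding S1_def S2_def by auto
  define t where "t = 1 / sqrt (1 + S2)"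
  have t2: "t\<^sup>2 = 1 / (1 + S2)" unfolding t_def using S by (simp add: power_divide)
  define c where "c = (\<lambda>i. complex_of_real t * ee j i)"
  have vc: "vnorm2 N c = t\<^sup>2" unfolding c_def vnorm2_scale vnorm2_ee[OF j] by simp
  have q1c: "qform N U1 c = t\<^sup>2 * S1" unfolding c_def qform_scale q1_ee[OF j] S1_def ..
  have q2c: "qform N U2 c = t\<^sup>2 * S2" unfolding c_def qform_scale q2_ee[OF j] S2_def ..
  have one: "1 - t\<^sup>2 = t\<^sup>2 * S2" unfolding t2 using S by (simp add: field_simps)
  have v1: "vnorm2 N c \<le> 1" unfolding vc t2 using S by simp
  have "GG c = t\<^sup>2 * S1" unfolding GG_def vc q1c q2c one by simp
  also have "\<dots> \<le> 1 * S1" using S t2 by (intro mult_right_mono) auto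
  finally show ?thesis using dG(2)[OF v1] unfolding S1_def by simp
qed

lemma FF_ge: "max LamMax 1 \<le> FF dF"
proof -
  have "FF (\<lambda>_. 0) = 1" unfolding FF_def vnorm2_def by (simp add: qform_zero)
  moreover have "FF (\<lambda>_. 0) \<le> FF dF" by (rule dF(2)) (simp add: vnorm2_def)
  moreover have "LamMax \<le> FF dmax" unfolding FF_def LamMax_def by simp
  moreover have "FF dmax \<le> FF dF" by (rule dF(2)) (simp add: dmax(1))
  ultimately show ?thesis by simp
qed

lemma main_setting:
  assumes fin: "finite {r. mat_eigenvalue N U1 (complex_of_real r)}"
  shows "riesz_basis sc ip BB
    \<and> opt_upper sc ip BB \<in> FF ` {c. vnorm2 N c \<le> 1}
    \<and> (\<forall>c. vnorm2 N c \<le> 1 \<longrightarrow> FF c \<le> opt_upper sc ip BB)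
    \<and> opt_lower sc ip BB \<in> GG ` {c. vnorm2 N c \<le> 1}
    \<and> (\<forall>c. vnorm2 N c \<le> 1 \<longrightarrow> opt_lower sc ip BB \<le> GG c)
    \<and> riesz_basis sc ip BBt
    \<and> opt_upper sc ip BB \<ge> opt_upper sc ip BBt
    \<and> opt_upper sc ip BBt = max (max_eig N U1) 1
    \<and> min_eig N U1 = opt_lower sc ip BBt
    \<and> opt_lower sc ip BBt \<le> max (opt_lower sc ip BB) (opt_lower sc ip BBt)
    \<and> max (opt_lower sc ip BB) (opt_lower sc ip BBt) \<le> Min ((\<lambda>j. (hnorm ip (P1 N (w j)))\<^sup>2) ` {..<N})"
proof (intro conjI)
  show "riesz_basis sc ip BB" by (rule riesz_BB)
  show "opt_upper sc ip BB \<in> FF ` {c. vnorm2 N c \<le> 1}" unfolding opt_upper_BB using dF(1) by blast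
  show "\<forall>c. vnorm2 N c \<le> 1 \<longrightarrow> FF c \<le> opt_upper sc ip BB" unfolding opt_upper_BB using dF(2) by blast
  show "opt_lower sc ip BB \<in> GG ` {c. vnorm2 N c \<le> 1}" unfolding opt_lower_BB using dG(1) by blast
  show "\<forall>c. vnorm2 N c \<le> 1 \<longrightarrow> opt_lower sc ip BB \<le> GG c" unfolding opt_lower_BB using dG(2) by blast
  show "riesz_basis sc ip BBt" by (rule riesz_BBt)
  show "opt_upper sc ip BB \<ge> opt_upper sc ip BBt" unfolding opt_upper_BB opt_upper_BBt by (rule FF_ge)
  show "opt_upper sc ip BBt = max (max_eig N U1) 1" unfolding opt_upper_BBt max_eig_U1[OF fin] ..
  show "min_eig N U1 = opt_lower sc ip BBt" unfolding opt_lower_BBt min_eig_U1[OF fin] ..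
  show "opt_lower sc ip BBt \<le> max (opt_lower sc ip BB) (opt_lower sc ip BBt)" by simp
  show "max (opt_lower sc ip BB) (opt_lower sc ip BBt) \<le> Min ((\<lambda>j. (hnorm ip (P1 N (w j)))\<^sup>2) ` {..<N})"
    unfolding opt_lower_BB opt_lower_BBt hnorm_sq
    using Npos GG_le_u LamMin_le_u by (subst Min_ge_iff) (auto simp: lessThan_empty_iff)
qed

end


lemma fin_eig: "finite {r. mat_eigenvalue N U (complex_of_real r)}"
proof -
  define A where "A = Matrix.mat N N (\<lambda>(i,j). U i j)"
  have A: "A \<in> carrier_mat N N" unfolding A_def by auto
  have "{r. mat_eigenvalue N U (complex_of_real r)} \<subseteq> Re ` {x. poly (char_poly A) x = 0}"
  proof
    fix r assume "r \<in> {r. mat_eigenvalue N U (complex_of_real r)}"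
    then obtain c where c: "\<exists>i<N. c i \<noteq> 0" "\<forall>i<N. (\<Sum>j<N. U i j * c j) = complex_of_real r * c i"
      unfolding mat_eigenvalue_def by auto
    define v where "v = Matrix.vec N c"
    have "eigenvector A v (complex_of_real r)"
      unfolding eigenvector_def
    proof (intro conjI)
      show "v \<in> carrier_vec (dim_row A)" using A v_def by auto
      show "v \<noteq> 0\<^sub>v (dim_row A)" using c(1) A unfolding v_def
        by (metis carrier_matD(1) index_vec index_zero_vec(1))
      show "A *\<^sub>v v = complex_of_real r \<cdot>\<^sub>v v"
        by (rule eq_vecI, insert c(2), auto simp: A_def v_def mult_mat_vec_def scalar_prod_def
           sum.atLeast0_lessThan_Suc lessThan_atLeast0[symmetric])
    qed
    hence "poly (char_poly A) (complex_of_real r) = 0"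
      using eigenvalue_root_char_poly[OF A] eigenvalue_def by blast
    thus "r \<in> Re ` {x. poly (char_poly A) x = 0}" by force
  qed
  moreover have "char_poly A \<noteq> 0" using degree_monic_char_poly[OF A] by auto
  ultimately show ?thesis using poly_roots_finite finite_subset by blast
qed

theorem mainTheorem2:
  fixes sc :: "complex \<Rightarrow> 'a::ab_group_add \<Rightarrow> 'a"
    and ip :: "'a \<Rightarrow> 'a \<Rightarrow> complex"
    and v w :: "nat \<Rightarrow> 'a"
    and N :: nat
    and H1 :: "'a set" and p1 p2 :: "'a \<Rightarrow> 'a"
    and U1 U2 :: "nat \<Rightarrow> nat \<Rightarrow> complex"
    and F G :: "(nat \<Rightarrow> complex) \<Rightarrow> real"
    and BB BBt :: "nat \<Rightarrow> 'a"
  assumes hilb: "complex_hilbert_space sc ip"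
    and sep: "hseparable ip"
    and onb: "orthonormal_basis ip v"
    and unit: "\<forall>j. hnorm ip (w j) = 1"
    and N: "N \<ge> 1"
    and H1_def: "H1 = fspan sc N v"
    and p1_def: "p1 = orth_proj ip H1"
    and p2_def: "p2 = orth_proj ip (orth_compl ip H1)"
    and U1_def: "U1 = gram ip (\<lambda>j. p1 (w j))"
    and U2_def: "U2 = gram ip (\<lambda>j. p2 (w j))"
    and BB_def: "BB = (\<lambda>j. if j < N then w j else v j)"
    and BBt_def: "BBt = (\<lambda>j. if j < N then p1 (w j) else v j)"
    and F_def: "F = (\<lambda>c. qform N U1 c + (sqrt (1 - vnorm2 N c) + sqrt (qform N U2 c))\<^sup>2)"
    and G_def: "G = (\<lambda>c. qform N U1 c + (sqrt (1 - vnorm2 N c) - sqrt (qform N U2 c))\<^sup>2)"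
    and basis: "is_basis_of sc N (\<lambda>j. p1 (w j)) H1"
  shows "riesz_basis sc ip BB
    \<and> opt_upper sc ip BB \<in> F ` {c. vnorm2 N c \<le> 1}
    \<and> (\<forall>c. vnorm2 N c \<le> 1 \<longrightarrow> F c \<le> opt_upper sc ip BB)
    \<and> opt_lower sc ip BB \<in> G ` {c. vnorm2 N c \<le> 1}
    \<and> (\<forall>c. vnorm2 N c \<le> 1 \<longrightarrow> opt_lower sc ip BB \<le> G c)
    \<and> riesz_basis sc ip BBt
    \<and> opt_upper sc ip BB \<ge> opt_upper sc ip BBt
    \<and> opt_upper sc ip BBt = max (max_eig N U1) 1
    \<and> min_eig N U1 = opt_lower sc ip BBt
    \<and> opt_lower sc ip BBt \<le> max (opt_lower sc ip BB) (opt_lower sc ip BBt)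
    \<and> max (opt_lower sc ip BB) (opt_lower sc ip BBt) \<le> Min ((\<lambda>j. (hnorm ip (p1 (w j)))\<^sup>2) ` {..<N})"
proof -
  interpret chs sc ip by unfold_locales (rule hilb)
  interpret onbs sc ip v by unfold_locales (rule onb)
  have p1: "p1 = P1 N" unfolding p1_def H1_def by (intro ext) (rule orth_proj_P1)
  have p2: "p2 = (\<lambda>x. x - P1 N x)" unfolding p2_def H1_def by (intro ext) (rule orth_proj_P2)
  interpret S: setting sc ip v w N
  proof unfold_locales
    show "nsq ip (w j) = 1" for j using unit hnorm_sq[of "w j"] by simp
    show "N \<ge> 1" by (rule N)
    show "is_basis_of sc N (\<lambda>j. P1 N (w j)) (fspan sc N v)" using basis unfolding p1 H1_def .
  qed
  have e1: "BB = S.BB" unfolding BB_def S.BB_def ..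
  have e2: "BBt = S.BBt" unfolding BBt_def S.BBt_def p1 ..
  have e3: "U1 = S.U1" unfolding U1_def S.U1_def p1 ..
  have e4: "U2 = S.U2" unfolding U2_def S.U2_def p2 ..
  have e5: "F = S.FF" unfolding F_def S.FF_def e3 e4 ..
  have e6: "G = S.GG" unfolding G_def S.GG_def e3 e4 ..
  show ?thesis unfolding e1 e2 e5 e6 e3 p1 using S.main_setting[OF fin_eig] .
qed

end
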